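(* There exist a bounded Jordan domain $\mathbb{Y}\subset\mathbb{C}$ and a homeomorphism $h\colon\overline{\mathbb{D}}\to\overline{\mathbb{Y}}$ (onto), where $\mathbb{D}$ is the open unit disk, such that $h\in\mathscr{W}^{1,1}(\mathbb{D},\mathbb{C})$ but its boundary restriction $\varphi=h|_{\partial\mathbb{D}}$ satisfies \[ \int_{\partial\mathbb{D}}\int_{\partial\mathbb{D}}\frac{d_{\mathbb{Y}}(\varphi(x),\varphi(y))}{|x-y|}\,dx\,dy=\infty . \]
   Context: The internal distance $d_{\mathbb{Y}}$ on $\overline{\mathbb{Y}}$ is $d_{\mathbb{Y}}(x,y)=\inf_\gamma|\gamma|$, the infimum of lengths of rectifiable curves $\gamma\subset\overline{\mathbb{Y}}$ connecting $x$ to $y$. Integrals over $\partial\mathbb{D}$ are with respect to arc length measure. *)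

theory Defs
  imports "HOL-Analysis.Analysis"
begin

definition curve_length :: "(real \<Rightarrow> complex) \<Rightarrow> ennreal" where
  "curve_length g =
     (SUP p \<in> {(n, t). t 0 = 0 \<and> t n = 1 \<and> (\<forall>i<n. t i \<le> t (Suc i))}.
        ennreal (\<Sum>i<fst p. dist (g (snd p (Suc i))) (g (snd p i))))"

definition rectifiable_path :: "(real \<Rightarrow> complex) \<Rightarrow> bool" where
  "rectifiable_path g \<longleftrightarrow> path g \<and> curve_length g < \<infinity>"

definition internal_dist :: "complex set \<Rightarrow> complex \<Rightarrow> complex \<Rightarrow> ennreal" where
  "internal_dist Y x y =
     (INF g \<in> {g. rectifiable_path g \<and> path_image g \<subseteq> closure Y \<and>
                  pathstart g = x \<and> pathfinish g = y}. curve_length g)"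

definition jordan_domain :: "complex set \<Rightarrow> bool" where
  "jordan_domain Y \<longleftrightarrow> bounded Y \<and>
     (\<exists>c. simple_path c \<and> pathfinish c = pathstart c \<and> Y = inside (path_image c))"

(* C^\<infinity> real-valued functions on C = R^2: differentiable everywhere, and both partial
   derivatives are again C^\<infinity> *)
coinductive smooth_fun :: "(complex \<Rightarrow> real) \<Rightarrow> bool" where
  "(\<forall>z. f differentiable (at z)) \<Longrightarrow>
   smooth_fun (\<lambda>z. frechet_derivative f (at z) 1) \<Longrightarrow>
   smooth_fun (\<lambda>z. frechet_derivative f (at z) \<i>) \<Longrightarrow> smooth_fun f"

definition test_function :: "complex set \<Rightarrow> (complex \<Rightarrow> real) \<Rightarrow> bool" where
  "test_function U \<psi> \<longleftrightarrow> smooth_fun \<psi> \<and>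
     compact (closure {z. \<psi> z \<noteq> 0}) \<and> closure {z. \<psi> z \<noteq> 0} \<subseteq> U"

(* f has weak partial derivative g in direction v (v = 1 for x, v = \<i> for y) on U *)
definition weak_partial :: "complex set \<Rightarrow> complex \<Rightarrow> (complex \<Rightarrow> complex) \<Rightarrow> (complex \<Rightarrow> complex) \<Rightarrow> bool" where
  "weak_partial U v f g \<longleftrightarrow>
     (\<forall>\<psi>. test_function U \<psi> \<longrightarrow>
        (LINT z:U|lborel. f z * of_real (frechet_derivative \<psi> (at z) v))
          = - (LINT z:U|lborel. g z * of_real (\<psi> z)))"

definition sobolev_W11 :: "complex set \<Rightarrow> (complex \<Rightarrow> complex) \<Rightarrow> bool" where
  "sobolev_W11 U f \<longleftrightarrow> set_integrable lborel U f \<and>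
     (\<exists>g1 g2. set_integrable lborel U g1 \<and> set_integrable lborel U g2 \<and>
        weak_partial U 1 f g1 \<and> weak_partial U \<i> f g2)"

end

theory Submission
  imports Defs "HOL-Complex_Analysis.Complex_Analysis"
begin

definition aa :: "nat \<Rightarrow> real" where "aa n = (1/2)^n"
definition mm :: "nat \<Rightarrow> nat" where "mm n = 2 ^ (4 ^ n)"
definition PP :: "complex \<Rightarrow> complex" where "PP z = z / of_real (max 1 (cmod z))"
definition VV :: "complex \<Rightarrow> real" where "VV z = (\<Sum>n. aa n * (Re (z ^ mm n))\<^sup>2)"
definition hh :: "complex \<Rightarrow> complex" where "hh z = z * of_real (1 + VV (PP z))"

lemma aa_pos: "aa n > 0" by (simp add: aa_def)
lemma summable_aa: "summable aa"
  unfolding aa_def by (rule summable_geometric) simp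
lemma suminf_aa: "(\<Sum>n. aa n) = 2"
  unfolding aa_def using suminf_geometric[of "1/2::real"] by simp

lemma mm_pos: "mm n \<ge> 1" by (simp add: mm_def)
lemma mm_inj: "inj mm"
proof -
  have "strict_mono mm" unfolding mm_def by (rule strict_monoI) simp
  then show ?thesis using strict_mono_imp_inj_on by blast
qed

lemma term_bound: "cmod z \<le> 1 \<Longrightarrow> \<bar>aa n * (Re (z ^ k))\<^sup>2\<bar> \<le> aa n"
proof -
  assume z: "cmod z \<le> 1"
  have "\<bar>Re (z^k)\<bar> \<le> 1"
    by (metis abs_Re_le_cmod norm_power order_trans power_le_one norm_ge_zero z)
  then have "(Re (z ^ k))\<^sup>2 \<le> 1" by (simp add: abs_square_le_1)
  then show ?thesis using aa_pos[of n] by (simp add: abs_mult mult_left_le)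
qed

lemma summable_VV: "cmod z \<le> 1 \<Longrightarrow> summable (\<lambda>n. aa n * (Re (z ^ mm n))\<^sup>2)"
  by (rule summable_comparison_test[OF _ summable_aa]) (use term_bound in auto)

lemma VV_nonneg: "cmod z \<le> 1 \<Longrightarrow> VV z \<ge> 0"
  unfolding VV_def by (rule suminf_nonneg[OF summable_VV]) (simp_all add: aa_def)

lemma VV_le2: "cmod z \<le> 1 \<Longrightarrow> VV z \<le> 2"
proof -
  assume z: "cmod z \<le> 1"
  have "VV z \<le> (\<Sum>n. aa n)" unfolding VV_def
    by (rule suminf_le[OF _ summable_VV[OF z] summable_aa]) (use term_bound[OF z] abs_le_D1 in blast)
  then show ?thesis by (simp add: suminf_aa)
qed

lemma cont_VV: "continuous_on (cball 0 1) VV"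
proof -
  have "uniform_limit (cball 0 1) (\<lambda>n x. \<Sum>i<n. aa i * (Re (x ^ mm i))\<^sup>2) (\<lambda>x. suminf (\<lambda>i. aa i * (Re (x ^ mm i))\<^sup>2)) sequentially"
    by (rule Weierstrass_m_test[OF _ summable_aa]) (use term_bound in auto)
  then show ?thesis unfolding VV_def[abs_def]
    by (rule uniform_limit_theorem[rotated]) (auto intro!: always_eventually continuous_intros)
qed

lemma PP_norm: "cmod (PP z) \<le> 1"
  by (auto simp: PP_def norm_divide divide_le_eq_1)

lemma PP_id: "cmod z \<le> 1 \<Longrightarrow> PP z = z"
  by (simp add: PP_def max_def)

lemma cont_PP: "continuous_on UNIV PP"
  unfolding PP_def by (intro continuous_intros) auto

lemma cont_hh: "continuous_on UNIV hh"
proof -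
  have "continuous_on UNIV (VV \<circ> PP)"
    by (rule continuous_on_compose[OF cont_PP continuous_on_subset[OF cont_VV]]) (use PP_norm in auto)
  then show ?thesis unfolding hh_def by (intro continuous_intros) (auto simp: o_def)
qed


lemma VV_scale:
  assumes c: "0 \<le> c" "c \<le> 1" and z: "cmod z \<le> 1"
  shows "VV (of_real c * z) \<le> VV z"
proof -
  have cz: "cmod (of_real c * z) \<le> 1" using c z by (simp add: norm_mult mult_le_one)
  have "aa n * (Re ((of_real c * z) ^ mm n))\<^sup>2 \<le> aa n * (Re (z ^ mm n))\<^sup>2" for n
  proof -
    have "(Re ((of_real c * z) ^ mm n))\<^sup>2 = (c ^ mm n)\<^sup>2 * (Re (z ^ mm n))\<^sup>2"
      by (simp add: power_mult_distrib power2_eq_square flip: of_real_power)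
    also have "\<dots> \<le> 1 * (Re (z ^ mm n))\<^sup>2"
      by (rule mult_right_mono) (use c in \<open>auto simp: power_le_one\<close>)
    finally show ?thesis using aa_pos[of n] by simp
  qed
  then show ?thesis unfolding VV_def
    by (intro suminf_le summable_VV cz z)
qed

lemma hh_cball: "cmod z \<le> 1 \<Longrightarrow> hh z = z * of_real (1 + VV z)"
  by (simp add: hh_def PP_id)

lemma inj_aux:
  assumes z: "cmod z \<le> 1" and c: "0 \<le> c" "c \<le> 1" and w: "w = of_real c * z"
    and eq: "hh z = hh w"
  shows "w = z"
proof (cases "z = 0")
  case True then show ?thesis using w by simp
next
  case False
  have wn: "cmod w \<le> 1" using w c z by (simp add: norm_mult mult_le_one)
  define l where "l = 1 + VV z"
  define u where "u = 1 + VV w"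
  have l0: "l \<ge> 1" using VV_nonneg[OF z] l_def by simp
  have u0: "u \<ge> 1" using VV_nonneg[OF wn] u_def by simp
  have ul: "u \<le> l" using VV_scale[OF c z] w l_def u_def by simp
  have "z * of_real l = z * of_real (c * u)"
    using eq hh_cball[OF z] hh_cball[OF wn] w l_def u_def by (simp add: algebra_simps)
  then have "complex_of_real l = complex_of_real (c * u)" using False by (metis mult_cancel_left)
  then have "l = c * u" by (simp only: of_real_eq_iff)
  then have "u * 1 \<le> u * c" using ul by (simp add: mult.commute)
  then have "1 \<le> c" using u0 by (subst (asm) mult_le_cancel_left_pos) auto
  then have "c = 1" using c by simp
  then show ?thesis using w by simp
qed

lemma inj_hh: "inj_on hh (cball 0 1)"
proof (rule inj_onI)
  fix z w assume z: "z \<in> cball 0 1" and w: "w \<in> cball 0 1" and eq: "hh z = hh w"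
  have zn: "cmod z \<le> 1" and wn: "cmod w \<le> 1" using z w by auto
  define l where "l = 1 + VV z"
  define u where "u = 1 + VV w"
  have l0: "l \<ge> 1" using VV_nonneg[OF zn] l_def by simp
  have u0: "u \<ge> 1" using VV_nonneg[OF wn] u_def by simp
  have e: "z * of_real l = w * of_real u" using eq hh_cball[OF zn] hh_cball[OF wn] l_def u_def by simp
  show "z = w"
  proof (cases "l / u \<le> 1")
    case True
    have "w = z * of_real l / of_real u" using e u0 by (simp add: nonzero_eq_divide_eq)
    then have "w = of_real (l/u) * z" by simp
    from inj_aux[OF zn _ True this eq] l0 u0 show ?thesis by simp
  next
    case False
    then have "u / l \<le> 1" using l0 u0 by (simp add: divide_le_eq)
    have "z = w * of_real u / of_real l" using e l0 by (simp add: nonzero_eq_divide_eq)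
    then have "z = of_real (u/l) * w" by simp
    from inj_aux[OF wn _ \<open>u / l \<le> 1\<close> this eq[symmetric]] l0 u0 show ?thesis by simp
  qed
qed

definition YY :: "complex set" where "YY = hh ` ball 0 1"

lemma closure_YY: "closure YY = hh ` cball 0 1"
proof
  have "compact (hh ` cball 0 1)"
    by (rule compact_continuous_image[OF continuous_on_subset[OF cont_hh]]) auto
  then show "closure YY \<subseteq> hh ` cball 0 1"
    unfolding YY_def by (intro closure_minimal image_mono) (auto simp: compact_imp_closed)
  have "hh ` closure (ball 0 1) \<subseteq> closure (hh ` ball 0 1)"
    by (rule image_closure_subset[OF continuous_on_subset[OF cont_hh]]) (auto intro: closure_subset[THEN subsetD])
  then show "hh ` cball 0 1 \<subseteq> closure YY" by (simp add: YY_def)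
qed

lemma homeo_hh: "\<exists>k. homeomorphism (cball 0 1) (closure YY) hh k"
  unfolding closure_YY
  by (rule homeomorphism_compact) (auto intro: continuous_on_subset[OF cont_hh] inj_hh)

lemma bounded_YY: "bounded YY"
proof -
  have "compact (hh ` cball 0 1)"
    by (rule compact_continuous_image[OF continuous_on_subset[OF cont_hh]]) auto
  moreover have "YY \<subseteq> hh ` cball 0 1" unfolding YY_def by auto
  ultimately show ?thesis using bounded_subset compact_imp_bounded by blast
qed

lemma open_YY: "open YY"
  unfolding YY_def
  by (rule invariance_of_domain) (auto intro: continuous_on_subset[OF cont_hh] inj_on_subset[OF inj_hh])

lemma jordan_YY: "jordan_domain YY"
proof -
  define c where "c = hh \<circ> circlepath 0 1"
  have pic: "path_image (circlepath 0 1) = sphere (0::complex) 1" by simp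
  have sp: "simple_path c" unfolding c_def
    by (rule simple_path_continuous_image)
       (auto simp: simple_path_circlepath pic intro: continuous_on_subset[OF cont_hh] inj_on_subset[OF inj_hh])
  have lp: "pathfinish c = pathstart c" by (simp add: c_def pathfinish_compose pathstart_compose)
  define J where "J = path_image c"
  have J: "J = hh ` sphere 0 1" by (simp add: J_def c_def path_image_compose)
  define W where "W = - (hh ` cball 0 1)"
  have Wo: "open W" unfolding W_def
    by (intro open_Compl compact_imp_closed compact_continuous_image continuous_on_subset[OF cont_hh]) auto
  have disj: "YY \<inter> W = {}" by (auto simp: YY_def W_def)
  have YJ: "YY \<inter> J = {}"
  proof (rule ccontr)
    assume "YY \<inter> J \<noteq> {}"
    then obtain x y where x: "x \<in> ball 0 1" and y: "y \<in> sphere 0 1" and "hh x = hh y"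
      unfolding YY_def J by auto
    then have "x = y" using inj_hh by (auto simp: inj_on_def)
    then show False using x y by simp
  qed
  have cbU: "hh ` cball 0 1 = YY \<union> J"
  proof -
    have "cball (0::complex) 1 = ball 0 1 \<union> sphere 0 1" by auto
    then show ?thesis unfolding YY_def J by (simp add: image_Un)
  qed
  have cJ: "- J = YY \<union> W"
    unfolding W_def cbU using YJ by blast
  note JIO = Jordan_inside_outside[OF sp lp, folded J_def]
  have Yne: "YY \<noteq> {}" by (simp add: YY_def)
  have Yc: "connected YY" unfolding YY_def
    by (intro connected_continuous_image continuous_on_subset[OF cont_hh]) auto
  have sub: "S \<subseteq> YY \<or> S \<subseteq> W" if "connected S" "S \<subseteq> - J" for S
    using connectedD[OF that(1) open_YY Wo] disj that(2) cJ by blast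
  have "outside J \<subseteq> W"
  proof -
    have "outside J \<subseteq> YY \<or> outside J \<subseteq> W"
    proof (rule sub)
      show "connected (outside J)" using JIO by blast
      show "outside J \<subseteq> - J" using outside_no_overlap[of J] by blast
    qed
    moreover have "\<not> outside J \<subseteq> YY" using JIO bounded_YY bounded_subset by blast
    ultimately show ?thesis by blast
  qed
  moreover have iou: "inside J \<union> outside J = - J" using JIO by blast
  ultimately have "YY \<subseteq> inside J" using cJ disj by blast
  moreover have "inside J \<subseteq> YY"
  proof -
    have "inside J \<subseteq> YY \<or> inside J \<subseteq> W"
    proof (rule sub)
      show "connected (inside J)" using JIO by blast
      show "inside J \<subseteq> - J" using inside_no_overlap[of J] by blast
    qed
    then show ?thesis using \<open>YY \<subseteq> inside J\<close> disj Yne by blast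
  qed
  ultimately have "YY = inside J" by blast
  then show ?thesis unfolding jordan_domain_def using bounded_YY sp lp J_def by blast
qed


definition RR :: "real \<Rightarrow> real" where "RR \<theta> = 1 + VV (cis \<theta>)"

lemma Re_cis_pow: "Re (cis t ^ n) = cos (real n * t)"
  unfolding Complex.DeMoivre by simp

lemma VV_cis: "VV (cis \<theta>) = (\<Sum>n. aa n * (cos (real (mm n) * \<theta>))\<^sup>2)"
  unfolding VV_def Re_cis_pow by (rule refl)

lemma summable_cis: "summable (\<lambda>n. aa n * (cos (real (mm n) * \<theta>))\<^sup>2)"
  using summable_VV[of "cis \<theta>"] unfolding Re_cis_pow by simp

lemma cont_RR: "continuous_on UNIV RR"
proof -
  have "continuous_on UNIV (\<lambda>\<theta>. VV (cis \<theta>))"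
    by (rule continuous_on_compose2[OF cont_VV]) (auto intro!: continuous_intros)
  then show ?thesis unfolding RR_def by (intro continuous_intros)
qed

lemma RR_meas[measurable]: "RR \<in> borel_measurable borel"
  by (rule borel_measurable_continuous_onI[OF cont_RR])

lemma isCont_RR: "isCont RR x"
  using cont_RR continuous_on_eq_continuous_at by blast

lemma RR_ge1: "RR \<theta> \<ge> 1"
  using VV_nonneg[of "cis \<theta>"] by (simp add: RR_def)

lemma norm_hh_cis: "cmod (hh (cis \<theta>)) = RR \<theta>"
proof -
  have "hh (cis \<theta>) = cis \<theta> * of_real (RR \<theta>)" by (simp add: hh_def PP_id RR_def)
  then show ?thesis using RR_ge1[of \<theta>] by (simp add: norm_mult)
qed

lemma internal_dist_ge: "ennreal (dist a b) \<le> internal_dist Y a b"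
  unfolding internal_dist_def
proof (rule INF_greatest)
  fix g assume "g \<in> {g. rectifiable_path g \<and> path_image g \<subseteq> closure Y \<and> pathstart g = a \<and> pathfinish g = b}"
  then have g0: "g 0 = a" "g 1 = b" by (auto simp: pathstart_def pathfinish_def)
  let ?p = "(1::nat, \<lambda>i::nat. if i = 0 then 0 else (1::real))"
  have "ennreal (\<Sum>i<fst ?p. dist (g (snd ?p (Suc i))) (g (snd ?p i))) \<le> curve_length g"
    unfolding curve_length_def by (rule SUP_upper) auto
  then show "ennreal (dist a b) \<le> curve_length g" using g0 by (simp add: dist_commute)
qed

lemma sin_2pi_nat: "sin (2 * pi * real (k::nat) + c) = sin c"
proof -
  have "sin (2*pi*real k) = 0" using sin_npi[of "2*k"] by (simp add: mult.commute mult.left_commute)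
  moreover have "cos (2*pi*real k) = 1" using cos_npi[of "2*k"] by (simp add: mult.commute mult.left_commute)
  ultimately show ?thesis by (simp add: sin_add)
qed

lemma sin_2pi_int: "sin (2 * pi * real_of_int (k::int) + c) = sin c"
proof -
  have "sin (2*pi*real_of_int k) = 0" using sin_int_2pin[of k] by simp
  moreover have "cos (2*pi*real_of_int k) = 1" using cos_int_2pin[of k] by simp
  ultimately show ?thesis by (simp add: sin_add)
qed

lemma cmod_cis_diff:
  assumes "0 < u" "u \<le> pi"
  shows "0 < cmod (cis (t+u) - cis t) \<and> cmod (cis (t+u) - cis t) \<le> u"
proof -
  have "cis (t+u) - cis t = cis t * (cis u - 1)" by (simp add: cis_mult[symmetric] algebra_simps)
  then have e: "cmod (cis (t+u) - cis t) = cmod (cis u - 1)" by (simp add: norm_mult)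
  have "(cmod (cis u - 1))\<^sup>2 = (cos u - 1)\<^sup>2 + (sin u)\<^sup>2" by (simp add: cmod_power2)
  also have "\<dots> = 2 - 2 * cos u" by (simp add: power2_diff sin_squared_eq)
  also have "cos u = cos (2 * (u/2))" by simp
  also have "\<dots> = 1 - 2 * (sin (u/2))\<^sup>2" by (rule cos_double_sin)
  finally have "(cmod (cis u - 1))\<^sup>2 = (2 * sin (u/2))\<^sup>2" by (simp add: power_mult_distrib)
  moreover have sp: "sin (u/2) > 0" using assms by (intro sin_gt_zero) auto
  ultimately have "cmod (cis u - 1) = 2 * sin (u/2)"
    by (metis norm_ge_zero power2_eq_iff_nonneg less_imp_le mult_nonneg_nonneg zero_le_numeral)
  moreover have "sin (u/2) \<le> u/2" using assms by (intro sin_x_le_x) auto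
  ultimately show ?thesis using e sp by simp
qed

lemma orth:
  fixes p q :: nat
  assumes p: "p \<ge> 1" and q: "q \<ge> 1"
  shows "(\<integral>t. cos (2 * real p * t + c) * cos (2 * real q * t) * indicator {0..pi} t \<partial>lborel)
         = (if p = q then pi/2 * cos c else 0)"
proof (cases "p = q")
  case True
  define F where "F t = t * cos c / 2 + sin (4 * real p * t + c) / (8 * real p)" for t
  have d: "DERIV F t :> cos (2 * real p * t + c) * cos (2 * real q * t)" for t
  proof -
    have "DERIV F t :> cos c / 2 + cos (4 * real p * t + c) * (4 * real p) / (8 * real p)"
      unfolding F_def by (auto intro!: derivative_eq_intros)
    moreover have "cos c / 2 + cos (4 * real p * t + c) * (4 * real p) / (8 * real p)
        = cos (2 * real p * t + c) * cos (2 * real q * t)"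
      using p True by (simp add: cos_times_cos field_simps)
    ultimately show ?thesis by simp
  qed
  have "(\<integral>t. cos (2 * real p * t + c) * cos (2 * real q * t) * indicator {0..pi} t \<partial>lborel) = F pi - F 0"
    by (rule integral_FTC_Icc_real[OF _ d]) (auto intro!: continuous_intros)
  also have "\<dots> = pi/2 * cos c"
  proof -
    have "sin (4 * real p * pi + c) = sin c"
      using sin_2pi_nat[of "2*p" c] by (simp add: algebra_simps)
    then show ?thesis unfolding F_def by simp
  qed
  finally show ?thesis using True by simp
next
  case False
  define d1 where "d1 = real p - real q"
  define d2 where "d2 = real p + real q"
  have d1: "d1 \<noteq> 0" using False by (simp add: d1_def)
  have d2: "d2 > 0" using p by (simp add: d2_def)
  define F where "F t = sin (2 * d1 * t + c) / (4 * d1) + sin (2 * d2 * t + c) / (4 * d2)" for t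
  have d: "DERIV F t :> cos (2 * real p * t + c) * cos (2 * real q * t)" for t
  proof -
    have dF: "DERIV F t :> cos (2 * d1 * t + c) * (2 * d1) / (4 * d1) + cos (2 * d2 * t + c) * (2 * d2) / (4 * d2)"
      unfolding F_def by (auto intro!: derivative_eq_intros)
    have e1: "cos (2 * real p * t + c) * cos (2 * real q * t) = (cos (2*d1*t + c) + cos (2*d2*t + c))/2"
      using cos_times_cos[of "2*real p*t + c" "2*real q*t"] by (simp add: d1_def d2_def algebra_simps)
    have eq: "cos (2 * d1 * t + c) * (2 * d1) / (4 * d1) + cos (2 * d2 * t + c) * (2 * d2) / (4 * d2)
        = cos (2 * real p * t + c) * cos (2 * real q * t)"
      using d1 d2 e1 by (simp add: field_simps)
    show ?thesis using dF[unfolded eq] .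
  qed
  have "(\<integral>t. cos (2 * real p * t + c) * cos (2 * real q * t) * indicator {0..pi} t \<partial>lborel) = F pi - F 0"
    by (rule integral_FTC_Icc_real[OF _ d]) (auto intro!: continuous_intros)
  also have "\<dots> = 0"
  proof -
    have "sin (2 * d1 * pi + c) = sin c"
      using sin_2pi_int[of "int p - int q" c] by (simp add: d1_def algebra_simps)
    moreover have "sin (2 * d2 * pi + c) = sin c"
      using sin_2pi_nat[of "p + q" c] by (simp add: d2_def algebra_simps)
    ultimately show ?thesis unfolding F_def by simp
  qed
  finally show ?thesis using False by simp
qed


lemma cos2: "(cos (x::real))\<^sup>2 = (1 + cos (2*x))/2"
  by (simp add: cos_double_cos)

lemma T_int:
  "(\<integral>t. aa j * ((cos (real (mm j) * (t+u)))\<^sup>2 - (cos (real (mm j) * t))\<^sup>2) * cos (2 * real (mm n) * t) * indicator {0..pi} t \<partial>lborel)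
   = (if j = n then aa n * pi / 4 * (cos (2 * real (mm n) * u) - 1) else 0)"
proof -
  define p where "p = mm j"
  define q where "q = mm n"
  have p1: "p \<ge> 1" and q1: "q \<ge> 1" using mm_pos by (auto simp: p_def q_def)
  have pq: "(p = q) = (j = n)" using mm_inj by (auto simp: p_def q_def inj_def)
  define A where "A t = cos (2 * real p * t + 2 * real p * u) * cos (2 * real q * t) * indicator {0..pi} t" for t
  define B where "B t = cos (2 * real p * t + 0) * cos (2 * real q * t) * indicator {0..pi} t" for t
  have pw: "aa j * ((cos (real (mm j) * (t+u)))\<^sup>2 - (cos (real (mm j) * t))\<^sup>2) * cos (2 * real (mm n) * t) * indicator {0..pi} t
      = aa j / 2 * (A t - B t)" for t
  proof -
    have h1: "(cos (real (mm j) * (t+u)))\<^sup>2 = (1 + cos (2 * real p * t + 2 * real p * u))/2"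
      by (simp add: cos2 p_def algebra_simps)
    have h2: "(cos (real (mm j) * t))\<^sup>2 = (1 + cos (2 * real p * t + 0))/2"
      by (simp add: cos2 p_def algebra_simps)
    show ?thesis unfolding h1 h2 A_def B_def q_def by (simp add: field_simps)
  qed
  have iA: "integrable lborel A" unfolding A_def
    by (rule borel_integrable_atLeastAtMost) (auto intro!: continuous_intros)
  have iB: "integrable lborel B" unfolding B_def
    by (rule borel_integrable_atLeastAtMost) (auto intro!: continuous_intros)
  have "(\<integral>t. aa j * ((cos (real (mm j) * (t+u)))\<^sup>2 - (cos (real (mm j) * t))\<^sup>2) * cos (2 * real (mm n) * t) * indicator {0..pi} t \<partial>lborel)
      = (\<integral>t. aa j / 2 * (A t - B t) \<partial>lborel)" by (simp only: pw)
  also have "\<dots> = aa j / 2 * ((\<integral>t. A t \<partial>lborel) - (\<integral>t. B t \<partial>lborel))"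
    by (simp add: Bochner_Integration.integral_diff[OF iA iB])
  also have "(\<integral>t. A t \<partial>lborel) = (if p = q then pi/2 * cos (2 * real p * u) else 0)"
    unfolding A_def by (rule orth[OF p1 q1])
  also have "(\<integral>t. B t \<partial>lborel) = (if p = q then pi/2 * cos 0 else 0)"
    unfolding B_def by (rule orth[OF p1 q1])
  finally show ?thesis using pq by (auto simp: p_def q_def algebra_simps)
qed

lemma RR_diff_sums:
  "(\<lambda>j. aa j * ((cos (real (mm j) * (t+u)))\<^sup>2 - (cos (real (mm j) * t))\<^sup>2)) sums (RR (t+u) - RR t)"
proof -
  have "(\<lambda>j. aa j * (cos (real (mm j) * (t+u)))\<^sup>2 - aa j * (cos (real (mm j) * t))\<^sup>2) sums (VV (cis (t+u)) - VV (cis t))"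
    unfolding VV_cis by (intro sums_diff summable_sums summable_cis)
  then show ?thesis by (simp add: RR_def right_diff_distrib)
qed

lemma sq_diff_le1: "\<bar>(cos a)\<^sup>2 - (cos b)\<^sup>2\<bar> \<le> (1::real)"
proof -
  have "(cos a)\<^sup>2 \<le> 1" "(cos b)\<^sup>2 \<le> 1" by (auto simp: abs_square_le_1)
  moreover have "0 \<le> (cos a)\<^sup>2" "0 \<le> (cos b)\<^sup>2" by auto
  ultimately show ?thesis by linarith
qed

lemma integral_const_Icc: "(a::real) \<le> b \<Longrightarrow> (\<integral>t. (c::real) * indicator {a..b} t \<partial>lborel) = c * (b - a)"
proof -
  assume ab: "a \<le> b"
  have "(\<integral>t. c * indicator {a..b} t \<partial>lborel) = c * b - c * a"
    by (rule integral_FTC_Icc_real[where F="\<lambda>t. c * t", OF ab]) (auto intro!: derivative_eq_intros)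
  then show ?thesis by (simp add: algebra_simps)
qed

lemma D_orth:
  "(\<integral>t. (RR (t+u) - RR t) * cos (2 * real (mm n) * t) * indicator {0..pi} t \<partial>lborel)
   = aa n * pi / 4 * (cos (2 * real (mm n) * u) - 1)"
proof -
  define f where "f j t = aa j * ((cos (real (mm j) * (t+u)))\<^sup>2 - (cos (real (mm j) * t))\<^sup>2) * cos (2 * real (mm n) * t) * indicator {0..pi} t" for j t
  have fs: "(\<lambda>j. f j t) sums ((RR (t+u) - RR t) * cos (2 * real (mm n) * t) * indicator {0..pi} t)" for t
    unfolding f_def by (intro sums_mult2 RR_diff_sums)
  have int[measurable]: "integrable lborel (f j)" for j unfolding f_def
    by (rule borel_integrable_atLeastAtMost) (auto intro!: continuous_intros)
  have bnd: "norm (f j t) \<le> aa j * indicator {0..pi} t" for j t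
  proof -
    have "\<bar>(cos (real (mm j) * (t+u)))\<^sup>2 - (cos (real (mm j) * t))\<^sup>2\<bar> * \<bar>cos (2 * real (mm n) * t)\<bar> \<le> 1 * 1"
      by (intro mult_mono sq_diff_le1) auto
    then have "aa j * (\<bar>(cos (real (mm j) * (t+u)))\<^sup>2 - (cos (real (mm j) * t))\<^sup>2\<bar> * \<bar>cos (2 * real (mm n) * t)\<bar>) \<le> aa j * 1"
      using aa_pos[of j] by (intro mult_left_mono) auto
    then show ?thesis using aa_pos[of j] unfolding f_def
      by (cases "t \<in> {0..pi}") (auto simp: abs_mult mult.assoc)
  qed
  have intn: "(\<integral>t. norm (f j t) \<partial>lborel) \<le> aa j * pi" for j
  proof -
    have "(\<integral>t. norm (f j t) \<partial>lborel) \<le> (\<integral>t. aa j * indicator {0..pi} t \<partial>lborel)"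
    proof (rule integral_mono)
      show "integrable lborel (\<lambda>t. norm (f j t))" using int by (rule integrable_norm)
      show "integrable lborel (\<lambda>t. aa j * indicator {0..pi} t)" by (rule borel_integrable_atLeastAtMost) auto
      fix t show "norm (f j t) \<le> aa j * indicator {0..pi} t" by (rule bnd)
    qed
    also have "\<dots> = aa j * pi" by (simp add: integral_const_Icc)
    finally show ?thesis .
  qed
  have summ: "summable (\<lambda>j. \<integral>t. norm (f j t) \<partial>lborel)"
    by (rule summable_comparison_test[of _ "\<lambda>j. aa j * pi"])
       (use intn in \<open>auto intro!: summable_mult2 summable_aa\<close>)
  have AEs: "AE t in lborel. summable (\<lambda>j. norm (f j t))"
  proof (rule AE_I2)
    fix t
    show "summable (\<lambda>j. norm (f j t))"
      by (rule summable_comparison_test[of _ "\<lambda>j. aa j * indicator {0..pi} t"])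
         (use bnd in \<open>auto intro!: summable_mult2 summable_aa\<close>)
  qed
  have "(\<integral>t. (\<Sum>j. f j t) \<partial>lborel) = (\<Sum>j. \<integral>t. f j t \<partial>lborel)"
    by (rule integral_suminf[OF int AEs summ])
  moreover have "(\<lambda>t. (\<Sum>j. f j t)) = (\<lambda>t. (RR (t+u) - RR t) * cos (2 * real (mm n) * t) * indicator {0..pi} t)"
    using fs sums_unique by (metis (no_types, lifting) ext)
  moreover have "(\<lambda>j. \<integral>t. f j t \<partial>lborel) = (\<lambda>j. if j = n then aa n * pi / 4 * (cos (2 * real (mm n) * u) - 1) else 0)"
    unfolding f_def by (intro ext T_int)
  moreover have "(\<Sum>j. (if j = n then aa n * pi / 4 * (cos (2 * real (mm n) * u) - 1) else 0)) = aa n * pi / 4 * (cos (2 * real (mm n) * u) - 1)"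
    using sums_single[of n "\<lambda>_. aa n * pi / 4 * (cos (2 * real (mm n) * u) - 1)"] sums_unique by fastforce
  ultimately show ?thesis by simp
qed

lemma isCont_RR_comp[continuous_intros]: "isCont f x \<Longrightarrow> isCont (\<lambda>x. RR (f x)) x"
  by (rule continuous_at_compose[unfolded o_def, OF _ isCont_RR])

lemma lower1:
  assumes u: "0 < u"
  shows "ennreal (aa n * pi / 4 * (1 - cos (2 * real (mm n) * u)) / u)
    \<le> (\<integral>\<^sup>+t. ennreal (\<bar>RR (t+u) - RR t\<bar> / u) * indicator {0..pi} t \<partial>lborel)"
proof -
  define D where "D t = RR (t+u) - RR t" for t
  have iD: "integrable lborel (\<lambda>t. \<bar>D t\<bar> / u * indicator {0..pi} t)" unfolding D_def
    by (rule borel_integrable_atLeastAtMost) (use u in \<open>auto intro!: continuous_intros\<close>)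
  have iD': "integrable lborel (\<lambda>t. \<bar>D t\<bar> * indicator {0..pi} t)" unfolding D_def
    by (rule borel_integrable_atLeastAtMost) (auto intro!: continuous_intros)
  have iDc: "integrable lborel (\<lambda>t. D t * cos (2 * real (mm n) * t) * indicator {0..pi} t)" unfolding D_def
    by (rule borel_integrable_atLeastAtMost) (auto intro!: continuous_intros)
  have e1: "(\<integral>\<^sup>+t. ennreal (\<bar>D t\<bar> / u) * indicator {0..pi} t \<partial>lborel)
      = (\<integral>\<^sup>+t. ennreal (\<bar>D t\<bar> / u * indicator {0..pi} t) \<partial>lborel)"
    by (intro nn_integral_cong) (auto split: split_indicator)
  also have "\<dots> = ennreal (\<integral>t. \<bar>D t\<bar> / u * indicator {0..pi} t \<partial>lborel)"
    by (rule nn_integral_eq_integral[OF iD], rule AE_I2) (use u in \<open>auto split: split_indicator\<close>)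
  finally have e2: "(\<integral>\<^sup>+t. ennreal (\<bar>D t\<bar> / u) * indicator {0..pi} t \<partial>lborel) = ennreal (\<integral>t. \<bar>D t\<bar> / u * indicator {0..pi} t \<partial>lborel)" .
  have "aa n * pi / 4 * (1 - cos (2 * real (mm n) * u)) = \<bar>\<integral>t. D t * cos (2 * real (mm n) * t) * indicator {0..pi} t \<partial>lborel\<bar>"
  proof -
    have "aa n * pi / 4 * (1 - cos (2 * real (mm n) * u)) \<ge> 0" using aa_pos[of n] by auto
    then show ?thesis unfolding D_def D_orth by (simp add: algebra_simps)
  qed
  also have "\<dots> \<le> (\<integral>t. \<bar>D t * cos (2 * real (mm n) * t) * indicator {0..pi} t\<bar> \<partial>lborel)"
    using integral_norm_bound[of lborel "\<lambda>t. D t * cos (2 * real (mm n) * t) * indicator {0..pi} t"] by simp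
  also have "\<dots> \<le> (\<integral>t. \<bar>D t\<bar> * indicator {0..pi} t \<partial>lborel)"
  proof (rule integral_mono[OF integrable_abs[OF iDc] iD'])
    fix t
    have "\<bar>D t\<bar> * \<bar>cos (2 * real (mm n) * t)\<bar> \<le> \<bar>D t\<bar> * 1" by (intro mult_left_mono) auto
    then show "\<bar>D t * cos (2 * real (mm n) * t) * indicator {0..pi} t\<bar> \<le> \<bar>D t\<bar> * indicator {0..pi} t"
      by (auto simp: abs_mult split: split_indicator)
  qed
  finally have "aa n * pi / 4 * (1 - cos (2 * real (mm n) * u)) / u \<le> (\<integral>t. \<bar>D t\<bar> * indicator {0..pi} t \<partial>lborel) / u"
    by (rule divide_right_mono) (use u in auto)
  also have "\<dots> = (\<integral>t. \<bar>D t\<bar> * indicator {0..pi} t / u \<partial>lborel)"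
    by (rule integral_divide_zero[symmetric])
  also have "\<dots> = (\<integral>t. \<bar>D t\<bar> / u * indicator {0..pi} t \<partial>lborel)"
    by (rule Bochner_Integration.integral_cong) auto
  finally show ?thesis unfolding D_def[symmetric] e2 by (simp add: ennreal_leI)
qed

lemma log_bound:
  assumes m: "m \<ge> (1::nat)"
  shows "ln (real m) \<le> (\<integral>u. (1 - cos (2 * real m * u)) / u * indicator {1/real m..pi} u \<partial>lborel)"
proof -
  have m0: "real m > 0" using m by simp
  have "1 / real m \<le> 1" using m by simp
  then have a: "1 / real m \<le> pi" using pi_gt3 by linarith
  define k where "k = 2 * real m"
  have k0: "k > 0" using m0 by (simp add: k_def)
  define F where "F u = ln u - sin (k * u) / (k * u) + 1 / (k * u)" for u
  define g where "g u = (1 - cos (k * u)) / u + (sin (k * u) - 1) / (k * u\<^sup>2)" for u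
  have dF: "DERIV F u :> g u" if "1/real m \<le> u" for u
  proof -
    have u0: "u > 0" using that m0 by (meson divide_pos_pos order_less_le_trans zero_less_one)
    have "DERIV F u :>
       1 / u - (cos (k * u) * k * (k * u) - sin (k * u) * k) / (k * u)\<^sup>2 + (- k / (k * u)\<^sup>2)"
      unfolding F_def using u0 k0 by (auto intro!: derivative_eq_intros simp: power2_eq_square)
    moreover have "1 / u - (cos (k * u) * k * (k * u) - sin (k * u) * k) / (k * u)\<^sup>2 + (- k / (k * u)\<^sup>2) = g u"
      unfolding g_def using u0 k0 by (simp add: field_simps power2_eq_square)
    ultimately show ?thesis by simp
  qed
  have cg: "isCont g u" if "1/real m \<le> u" for u
  proof -
    have u0: "u > 0" using that m0 by (meson divide_pos_pos order_less_le_trans zero_less_one)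
    show ?thesis unfolding g_def using u0 k0 by (auto intro!: continuous_intros)
  qed
  have cf: "isCont (\<lambda>u. (1 - cos (2 * real m * u)) / u) u" if "1/real m \<le> u" for u
  proof -
    have u0: "u > 0" using that m0 by (meson divide_pos_pos order_less_le_trans zero_less_one)
    show ?thesis using u0 by (auto intro!: continuous_intros)
  qed
  have "(\<integral>u. g u * indicator {1/real m..pi} u \<partial>lborel) = F pi - F (1/real m)"
    by (rule integral_FTC_Icc_real[OF a]) (auto intro!: dF cg)
  also have "F pi - F (1/real m) = ln pi + ln (real m) + sin 2 / 2 - 1/2 + 1 / (2 * real m * pi)"
  proof -
    have "sin (k * pi) = 0" using sin_npi[of "2*m"] by (simp add: k_def mult.commute mult.left_commute)
    moreover have "k * (1 / real m) = 2" using m0 by (simp add: k_def)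
    moreover have "ln (1 / real m) = - ln (real m)" using m0 by (simp add: ln_div)
    ultimately show ?thesis unfolding F_def using m0 by (simp add: k_def)
  qed
  also have "\<dots> \<ge> ln (real m)"
  proof -
    have "ln 2 \<le> ln pi" using pi_gt3 by (subst ln_le_cancel_iff) auto
    moreover have "2/3 \<le> ln (2::real)" by (rule ln2_ge_two_thirds)
    moreover have "sin (2::real) \<ge> 0" using pi_gt3 by (intro sin_ge_zero) auto
    moreover have "1 / (2 * real m * pi) \<ge> 0" using m0 by simp
    ultimately show ?thesis by linarith
  qed
  finally have "ln (real m) \<le> (\<integral>u. g u * indicator {1/real m..pi} u \<partial>lborel)" .
  also have "\<dots> \<le> (\<integral>u. (1 - cos (2 * real m * u)) / u * indicator {1/real m..pi} u \<partial>lborel)"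
  proof (rule integral_mono)
    show "integrable lborel (\<lambda>u. g u * indicator {1/real m..pi} u)"
      by (rule borel_integrable_atLeastAtMost) (auto intro!: cg)
    show "integrable lborel (\<lambda>u. (1 - cos (2 * real m * u)) / u * indicator {1/real m..pi} u)"
      by (rule borel_integrable_atLeastAtMost) (auto intro!: cf)
    fix u
    show "g u * indicator {1/real m..pi} u \<le> (1 - cos (2 * real m * u)) / u * indicator {1/real m..pi} u"
    proof (cases "u \<in> {1/real m..pi}")
      case True
      have "(sin (k * u) - 1) / (k * u\<^sup>2) \<le> 0"
        using k0 by (intro divide_nonpos_nonneg) auto
      then show ?thesis using True unfolding g_def k_def by auto
    qed simp
  qed
  finally show ?thesis .
qed


lemma cis_meas[measurable]: "cis \<in> borel_measurable borel"
  by (intro borel_measurable_continuous_onI continuous_intros)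

definition EE :: "real \<Rightarrow> real \<Rightarrow> ennreal" where "EE t u = ennreal (\<bar>RR (t+u) - RR t\<bar> / u)"
definition KK :: "real \<Rightarrow> real \<Rightarrow> real" where "KK s t = \<bar>RR s - RR t\<bar> / cmod (cis s - cis t)"

lemma EE_meas[measurable]: "(\<lambda>(u, t). EE t u) \<in> borel_measurable (lborel \<Otimes>\<^sub>M lborel)"
  unfolding EE_def by measurable

lemma KK_meas[measurable]: "(\<lambda>s. KK s t) \<in> borel_measurable borel"
  unfolding KK_def by measurable

lemma Phi_ge: "ennreal (KK s t) \<le> internal_dist YY (hh (cis s)) (hh (cis t)) / ennreal (cmod (cis s - cis t))"
proof (cases "cmod (cis s - cis t) = 0")
  case True then show ?thesis by (simp add: KK_def)
next
  case False
  then have d: "cmod (cis s - cis t) > 0" by simp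
  have "\<bar>RR s - RR t\<bar> \<le> dist (hh (cis s)) (hh (cis t))"
    unfolding dist_norm norm_hh_cis[symmetric] by (rule norm_triangle_ineq3)
  then have "ennreal \<bar>RR s - RR t\<bar> \<le> internal_dist YY (hh (cis s)) (hh (cis t))"
    using internal_dist_ge[of "hh (cis s)" "hh (cis t)" YY] ennreal_leI order_trans by blast
  then have "ennreal \<bar>RR s - RR t\<bar> / ennreal (cmod (cis s - cis t)) \<le> internal_dist YY (hh (cis s)) (hh (cis t)) / ennreal (cmod (cis s - cis t))"
    by (rule divide_right_mono_ennreal)
  then show ?thesis unfolding KK_def using d by (simp add: divide_ennreal)
qed

lemma inner_ge:
  assumes t: "t \<in> {0..pi}"
  shows "(\<integral>\<^sup>+u. EE t u * indicator {0..pi} u \<partial>lborel)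
    \<le> (\<integral>\<^sup>+s. internal_dist YY (hh (cis s)) (hh (cis t)) / ennreal (cmod (cis s - cis t)) * indicator {0..2*pi} s \<partial>lborel)"
proof -
  have "(\<integral>\<^sup>+u. EE t u * indicator {0..pi} u \<partial>lborel) \<le> (\<integral>\<^sup>+u. ennreal (KK (t+u) t) * indicator {0..pi} u \<partial>lborel)"
  proof (rule nn_integral_mono)
    fix u
    show "EE t u * indicator {0..pi} u \<le> ennreal (KK (t+u) t) * indicator {0..pi} u"
    proof (cases "u \<in> {0..pi}")
      case True
      show ?thesis
      proof (cases "u = 0")
        case True then show ?thesis by (simp add: EE_def)
      next
        case False
        then have u: "0 < u" "u \<le> pi" using \<open>u \<in> {0..pi}\<close> by auto
        note cd = cmod_cis_diff[OF u, of t]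
        have "\<bar>RR (t+u) - RR t\<bar> / u \<le> \<bar>RR (t+u) - RR t\<bar> / cmod (cis (t+u) - cis t)"
          by (rule divide_left_mono) (use cd u in auto)
        then show ?thesis using True by (simp add: EE_def KK_def ennreal_leI)
      qed
    qed simp
  qed
  also have "\<dots> = (\<integral>\<^sup>+s. ennreal (KK s t) * indicator {t..t+pi} s \<partial>lborel)"
  proof -
    have "(\<integral>\<^sup>+s. ennreal (KK s t) * indicator {t..t+pi} s \<partial>lborel)
        = ennreal \<bar>1\<bar> * (\<integral>\<^sup>+x. ennreal (KK (t + 1 * x) t) * indicator {t..t+pi} (t + 1 * x) \<partial>lborel)"
      by (rule nn_integral_real_affine) auto
    also have "\<dots> = (\<integral>\<^sup>+u. ennreal (KK (t+u) t) * indicator {0..pi} u \<partial>lborel)"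
      by (auto intro!: nn_integral_cong split: split_indicator)
    finally show ?thesis by simp
  qed
  also have "\<dots> \<le> (\<integral>\<^sup>+s. internal_dist YY (hh (cis s)) (hh (cis t)) / ennreal (cmod (cis s - cis t)) * indicator {0..2*pi} s \<partial>lborel)"
  proof (rule nn_integral_mono)
    fix s
    show "ennreal (KK s t) * indicator {t..t+pi} s \<le> internal_dist YY (hh (cis s)) (hh (cis t)) / ennreal (cmod (cis s - cis t)) * indicator {0..2*pi} s"
      using t Phi_ge[of s t] by (auto split: split_indicator)
  qed
  finally show ?thesis .
qed

lemma div_lower:
  "ennreal (aa n * pi / 4 * ln (real (mm n)))
   \<le> (\<integral>\<^sup>+ t \<in> {0..2*pi}. (\<integral>\<^sup>+ s \<in> {0..2*pi}.
         internal_dist YY (hh (cis s)) (hh (cis t)) / ennreal (cmod (cis s - cis t)) \<partial>lborel) \<partial>lborel)"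
proof -
  define C where "C = aa n * pi / 4"
  have C0: "C \<ge> 0" using aa_pos[of n] by (simp add: C_def)
  define m where "m = mm n"
  have m1: "m \<ge> 1" using mm_pos by (simp add: m_def)
  have "ennreal (C * ln (real m)) \<le> ennreal (C * (\<integral>u. (1 - cos (2 * real m * u)) / u * indicator {1/real m..pi} u \<partial>lborel))"
    using log_bound[OF m1] C0 by (intro ennreal_leI mult_left_mono)
  also have "\<dots> = ennreal (\<integral>u. C * ((1 - cos (2 * real m * u)) / u * indicator {1/real m..pi} u) \<partial>lborel)"
    by (simp only: integral_mult_right_zero)
  also have "\<dots> = ennreal (\<integral>u. C * (1 - cos (2 * real m * u)) / u * indicator {1/real m..pi} u \<partial>lborel)"
    by (rule arg_cong[where f=ennreal], rule Bochner_Integration.integral_cong) auto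
  also have "\<dots> = (\<integral>\<^sup>+u. ennreal (C * (1 - cos (2 * real m * u)) / u * indicator {1/real m..pi} u) \<partial>lborel)"
  proof (rule nn_integral_eq_integral[symmetric])
    show "integrable lborel (\<lambda>u. C * (1 - cos (2 * real m * u)) / u * indicator {1/real m..pi} u)"
    proof (rule borel_integrable_atLeastAtMost)
      fix u assume "1 / real m \<le> u"
      then have "u > 0" using m1 by (meson divide_pos_pos of_nat_0_less_iff order_less_le_trans zero_less_one less_le_trans le_numeral_extra(2) not_one_le_zero not_le)
      then show "isCont (\<lambda>u. C * (1 - cos (2 * real m * u)) / u) u" by (auto intro!: continuous_intros)
    qed
    show "AE u in lborel. 0 \<le> C * (1 - cos (2 * real m * u)) / u * indicator {1/real m..pi} u"
    proof (rule AE_I2)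
      fix u
      show "0 \<le> C * (1 - cos (2 * real m * u)) / u * indicator {1/real m..pi} u"
      proof (cases "u \<in> {1/real m..pi}")
        case True
        then have "u > 0" using m1 by (auto intro: less_le_trans[of 0 "1/real m"])
        then show ?thesis using True C0 by auto
      qed simp
    qed
  qed
  also have "\<dots> \<le> (\<integral>\<^sup>+u. (\<integral>\<^sup>+t. EE t u * indicator {0..pi} t \<partial>lborel) * indicator {0..pi} u \<partial>lborel)"
  proof (rule nn_integral_mono)
    fix u
    show "ennreal (C * (1 - cos (2 * real m * u)) / u * indicator {1/real m..pi} u)
        \<le> (\<integral>\<^sup>+t. EE t u * indicator {0..pi} t \<partial>lborel) * indicator {0..pi} u"
    proof (cases "u \<in> {1/real m..pi}")
      case True
      then have u0: "u > 0" using m1 by (auto intro: less_le_trans[of 0 "1/real m"])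
      then have "u \<in> {0..pi}" using True by auto
      then show ?thesis using True lower1[OF u0, of n]
        by (simp add: C_def m_def EE_def)
    qed simp
  qed
  also have "\<dots> = (\<integral>\<^sup>+u. (\<integral>\<^sup>+t. EE t u * indicator {0..pi} t * indicator {0..pi} u \<partial>lborel) \<partial>lborel)"
    by (rule nn_integral_cong, rule nn_integral_multc[symmetric]) measurable
  also have "\<dots> = (\<integral>\<^sup>+t. (\<integral>\<^sup>+u. EE t u * indicator {0..pi} t * indicator {0..pi} u \<partial>lborel) \<partial>lborel)"
    by (rule lborel_pair.Fubini'[symmetric]) measurable
  also have "\<dots> = (\<integral>\<^sup>+t. (\<integral>\<^sup>+u. EE t u * indicator {0..pi} u \<partial>lborel) * indicator {0..pi} t \<partial>lborel)"
  proof (rule nn_integral_cong)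
    fix t
    have "(\<integral>\<^sup>+u. EE t u * indicator {0..pi} t * indicator {0..pi} u \<partial>lborel)
        = (\<integral>\<^sup>+u. EE t u * indicator {0..pi} u * indicator {0..pi} t \<partial>lborel)"
      by (simp add: ac_simps)
    also have "\<dots> = (\<integral>\<^sup>+u. EE t u * indicator {0..pi} u \<partial>lborel) * indicator {0..pi} t"
      by (rule nn_integral_multc) measurable
    finally show "(\<integral>\<^sup>+u. EE t u * indicator {0..pi} t * indicator {0..pi} u \<partial>lborel)
        = (\<integral>\<^sup>+u. EE t u * indicator {0..pi} u \<partial>lborel) * indicator {0..pi} t" .
  qed
  also have "\<dots> \<le> (\<integral>\<^sup>+ t \<in> {0..2*pi}. (\<integral>\<^sup>+ s \<in> {0..2*pi}.
         internal_dist YY (hh (cis s)) (hh (cis t)) / ennreal (cmod (cis s - cis t)) \<partial>lborel) \<partial>lborel)"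
  proof (rule nn_integral_mono)
    fix t
    show "(\<integral>\<^sup>+u. EE t u * indicator {0..pi} u \<partial>lborel) * indicator {0..pi} t
      \<le> (\<integral>\<^sup>+ s \<in> {0..2*pi}. internal_dist YY (hh (cis s)) (hh (cis t)) / ennreal (cmod (cis s - cis t)) \<partial>lborel) * indicator {0..2*pi} t"
    proof (cases "t \<in> {0..pi}")
      case True
      then have "t \<in> {0..2*pi}" by auto
      then show ?thesis using inner_ge[OF True] True by simp
    qed simp
  qed
  finally show ?thesis by (simp add: C_def m_def)
qed

lemma divergence:
  "(\<integral>\<^sup>+ t \<in> {0..2*pi}. (\<integral>\<^sup>+ s \<in> {0..2*pi}.
         internal_dist YY (hh (cis s)) (hh (cis t)) / ennreal (cmod (cis s - cis t)) \<partial>lborel) \<partial>lborel) = \<infinity>"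
  (is "?L = \<infinity>")
proof (rule ccontr)
  assume "?L \<noteq> \<infinity>"
  then obtain r where r: "?L = ennreal r" "r \<ge> 0" by (cases ?L rule: ennreal_cases) auto
  have "ln (real (mm n)) = real (4^n) * ln 2" for n
    by (simp add: mm_def ln_realpow)
  then have val: "aa n * pi / 4 * ln (real (mm n)) = pi / 4 * ln 2 * 2 ^ n" for n
  proof -
    have "aa n * real (4^n) = (1/2::real)^n * 4^n" by (simp add: aa_def)
    also have "\<dots> = (1/2 * 4)^n" by (rule power_mult_distrib[symmetric])
    also have "\<dots> = 2^n" by simp
    finally have "aa n * real (4^n) = 2^n" .
    then show ?thesis using \<open>ln (real (mm n)) = real (4^n) * ln 2\<close> by (simp add: algebra_simps)
  qed
  have lp: "pi / 4 * ln 2 > 0" by simp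
  obtain n where n: "r / (pi / 4 * ln 2) < 2 ^ n" using real_arch_pow[of 2 "r / (pi / 4 * ln 2)"] by auto
  then have "r < pi / 4 * ln 2 * 2 ^ n" using lp by (simp add: divide_less_eq mult.commute)
  moreover have "ennreal (aa n * pi / 4 * ln (real (mm n))) \<le> ennreal r" using div_lower[of n] unfolding r(1) .
  then have "aa n * pi / 4 * ln (real (mm n)) \<le> r" using ennreal_le_iff[OF r(2)] by blast
  then have "pi / 4 * ln 2 * 2 ^ n \<le> r" by (simp only: val)
  ultimately show False by simp
qed


lemma term_deriv:
  fixes z :: complex and m :: nat
  shows "((\<lambda>z. c * (Re (z ^ m))\<^sup>2) has_derivative (\<lambda>v. c * (2 * Re (z ^ m) * Re (of_nat m * z ^ (m - 1) * v)))) (at z within S)"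
proof -
  have d1: "((\<lambda>z. z ^ m) has_derivative (\<lambda>v. of_nat m * z ^ (m - 1) * v)) (at z within S)"
    using has_derivative_power[OF has_derivative_ident, where n=m] by (simp add: ac_simps)
  have d2: "((\<lambda>z. Re (z ^ m)) has_derivative (\<lambda>v. Re (of_nat m * z ^ (m - 1) * v))) (at z within S)"
    using bounded_linear.has_derivative[OF bounded_linear_Re d1] .
  show ?thesis
    using has_derivative_mult[OF d2 d2] by (auto intro!: derivative_eq_intros simp: power2_eq_square algebra_simps)
qed

lemma kpow:
  fixes r :: real assumes r: "0 \<le> r" "r < 1"
  shows "real k * r ^ (k - 1) \<le> 1 / (1 - r)"
proof -
  have "real k * r ^ (k - 1) = (\<Sum>i<k. r ^ (k - 1))" by simp
  also have "\<dots> \<le> (\<Sum>i<k. r ^ i)"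
    by (intro sum_mono power_decreasing) (use r in auto)
  also have "\<dots> = (1 - r ^ k) / (1 - r)" using r by (simp add: sum_gp_strict)
  also have "\<dots> \<le> 1 / (1 - r)" using r by (intro divide_right_mono) auto
  finally show ?thesis .
qed

definition tt :: "nat \<Rightarrow> complex \<Rightarrow> complex \<Rightarrow> real" where
  "tt n z v = aa n * (2 * Re (z ^ mm n) * Re (of_nat (mm n) * z ^ (mm n - 1) * v))"

definition VVd :: "complex \<Rightarrow> complex \<Rightarrow> real" where
  "VVd z v = (\<Sum>n. tt n z v)"

definition DH :: "complex \<Rightarrow> complex \<Rightarrow> complex" where
  "DH z v = v * of_real (1 + VV z) + z * of_real (VVd z v)"

lemma tt_bound: "\<bar>tt n z v\<bar> \<le> aa n * (2 * real (mm n) * cmod z ^ mm n * cmod z ^ (mm n - 1) * cmod v)"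
proof -
  have "\<bar>Re (z ^ mm n)\<bar> \<le> cmod z ^ mm n" by (metis abs_Re_le_cmod norm_power)
  moreover have "\<bar>Re (of_nat (mm n) * z ^ (mm n - 1) * v)\<bar> \<le> real (mm n) * cmod z ^ (mm n - 1) * cmod v"
    by (metis abs_Re_le_cmod norm_mult norm_of_nat norm_power)
  ultimately have "\<bar>2 * Re (z ^ mm n) * Re (of_nat (mm n) * z ^ (mm n - 1) * v)\<bar>
      \<le> 2 * (cmod z ^ mm n * (real (mm n) * cmod z ^ (mm n - 1) * cmod v))"
    by (simp add: abs_mult mult_mono)
  then show ?thesis unfolding tt_def using aa_pos[of n]
    by (simp add: abs_mult mult_left_mono ac_simps)
qed

lemma tt_bound_rho:
  assumes z: "cmod z \<le> r" and r: "0 \<le> r" "r < 1"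
  shows "\<bar>tt n z v\<bar> \<le> aa n * (2 / (1 - r)) * cmod v"
proof -
  have "cmod z ^ mm n \<le> 1" using z r by (intro power_le_one) auto
  moreover have "real (mm n) * cmod z ^ (mm n - 1) \<le> real (mm n) * r ^ (mm n - 1)"
    using z by (intro mult_left_mono power_mono) auto
  moreover have "real (mm n) * r ^ (mm n - 1) \<le> 1 / (1 - r)" by (rule kpow[OF r])
  ultimately have P: "cmod z ^ mm n * (real (mm n) * cmod z ^ (mm n - 1)) \<le> 1 * (1 / (1 - r))"
    by (intro mult_mono) auto
  have "aa n * (2 * real (mm n) * cmod z ^ mm n * cmod z ^ (mm n - 1) * cmod v)
      = (aa n * 2 * cmod v) * (cmod z ^ mm n * (real (mm n) * cmod z ^ (mm n - 1)))" by (simp add: ac_simps)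
  also have "\<dots> \<le> (aa n * 2 * cmod v) * (1 * (1 / (1 - r)))"
    by (rule mult_left_mono[OF P]) (use aa_pos[of n] in auto)
  also have "\<dots> = aa n * (2 / (1 - r)) * cmod v" by simp
  finally have "aa n * (2 * real (mm n) * cmod z ^ mm n * cmod z ^ (mm n - 1) * cmod v) \<le> aa n * (2 / (1 - r)) * cmod v" .
  then show ?thesis using tt_bound[of n z v] by linarith
qed

lemma summable_tt: "cmod z < 1 \<Longrightarrow> summable (\<lambda>n. tt n z v)"
proof -
  assume z: "cmod z < 1"
  have "summable (\<lambda>n. aa n * (2 / (1 - cmod z)) * cmod v)"
    by (intro summable_mult2 summable_aa)
  then show ?thesis
    by (rule summable_comparison_test[rotated]) (use tt_bound_rho[OF order.refl _ z] in auto)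
qed

lemma VVd_bound:
  assumes z: "cmod z \<le> r" and r: "0 \<le> r" "r < 1"
  shows "\<bar>VVd z v\<bar> \<le> 4 / (1 - r) * cmod v"
proof -
  have zz: "cmod z < 1" using z r by simp
  have s: "summable (\<lambda>n. aa n * (2 / (1 - r)) * cmod v)" by (intro summable_mult2 summable_aa)
  have "\<bar>VVd z v\<bar> \<le> (\<Sum>n. \<bar>tt n z v\<bar>)" unfolding VVd_def
    by (rule summable_rabs) (rule summable_comparison_test'[OF s, where N=0], use tt_bound_rho[OF z r] in simp)
  also have "\<dots> \<le> (\<Sum>n. aa n * (2 / (1 - r)) * cmod v)"
    by (rule suminf_le[OF _ _ s]) (use tt_bound_rho[OF z r] in simp, rule summable_comparison_test'[OF s, where N=0], use tt_bound_rho[OF z r] in simp)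
  also have "\<dots> = (\<Sum>n. aa n * ((2 / (1 - r)) * cmod v))" by (simp only: mult.assoc)
  also have "\<dots> = (\<Sum>n. aa n) * ((2 / (1 - r)) * cmod v)" by (rule suminf_mult2[OF summable_aa, symmetric])
  also have "\<dots> = 2 * (2 / (1 - r)) * cmod v" by (simp add: suminf_aa)
  finally show ?thesis by simp
qed

lemma VV_deriv:
  assumes z: "cmod z < 1"
  shows "(VV has_derivative VVd z) (at z)"
proof -
  define r where "r = (1 + cmod z) / 2"
  have r: "0 \<le> r" "r < 1" "cmod z < r" using z by (auto simp: r_def)
  define S where "S = ball (0::complex) r"
  have zS: "z \<in> S" using r by (simp add: S_def)
  define C where "C = 2 / (1 - r)"
  have C: "C > 0" using r by (simp add: C_def)
  have unif: "\<forall>\<^sub>F n in sequentially. \<forall>x\<in>S. \<forall>h. norm ((\<Sum>i<n. tt i x h) - VVd x h) \<le> e * norm h"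
    if e: "e > 0" for e
  proof -
    have "(\<lambda>n. (1/2::real)^n) \<longlonglongrightarrow> 0" by (rule LIMSEQ_power_zero) simp
    then have "\<forall>\<^sub>F n in sequentially. (1/2::real)^n < e / (2 * C)"
      using e C by (intro order_tendstoD) auto
    then show ?thesis
    proof eventually_elim
      case (elim n)
      show ?case
      proof (intro ballI allI)
        fix x h assume x: "x \<in> S"
        have xr: "cmod x \<le> r" using x by (simp add: S_def)
        have xx: "cmod x < 1" using xr r by simp
        have sm: "summable (\<lambda>i. tt i x h)" by (rule summable_tt[OF xx])
        have s2: "summable (\<lambda>i. aa (i + n) * C * cmod h)"
          using summable_ignore_initial_segment[OF summable_aa, of n] by (intro summable_mult2)
        have "norm ((\<Sum>i<n. tt i x h) - VVd x h) = \<bar>\<Sum>i. tt (i + n) x h\<bar>"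
          unfolding VVd_def suminf_minus_initial_segment[OF sm] by simp
        also have "\<dots> \<le> (\<Sum>i. \<bar>tt (i + n) x h\<bar>)"
          by (rule summable_rabs) (rule summable_comparison_test'[OF s2, where N=0], use tt_bound_rho[OF xr r(1,2)] in \<open>simp add: C_def\<close>)
        also have "\<dots> \<le> (\<Sum>i. aa (i + n) * C * cmod h)"
          by (rule suminf_le[OF _ _ s2]) (use tt_bound_rho[OF xr r(1,2)] in \<open>simp add: C_def\<close>, rule summable_comparison_test'[OF s2, where N=0], use tt_bound_rho[OF xr r(1,2)] in \<open>simp add: C_def\<close>)
        also have "\<dots> = (1/2)^n * 2 * C * cmod h"
        proof -
          have "(\<lambda>i. aa (i + n) * C * cmod h) = (\<lambda>i. aa i * ((1/2)^n * C * cmod h))"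
            by (auto simp: aa_def power_add)
          then show ?thesis using suminf_mult2[OF summable_aa, of "(1/2)^n * C * cmod h"]
            by (simp add: suminf_aa)
        qed
        also have "\<dots> \<le> e * cmod h"
        proof -
          have "(1/2)^n * 2 * C \<le> e" using elim C by (simp add: field_simps)
          then show ?thesis by (intro mult_right_mono) auto
        qed
        finally show "norm ((\<Sum>i<n. tt i x h) - VVd x h) \<le> e * norm h" by simp
      qed
    qed
  qed
  have "\<exists>g. \<forall>x\<in>S. (\<lambda>n. aa n * (Re (x ^ mm n))\<^sup>2) sums g x \<and> (g has_derivative VVd x) (at x within S)"
  proof (rule has_derivative_series[where f="\<lambda>n x. aa n * (Re (x ^ mm n))\<^sup>2" and f'="\<lambda>n x. tt n x", OF _ _ unif zS])
    show "convex S" by (simp add: S_def)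
    show "\<And>n x. x \<in> S \<Longrightarrow> ((\<lambda>x. aa n * (Re (x ^ mm n))\<^sup>2) has_derivative tt n x) (at x within S)"
      unfolding tt_def[abs_def] by (rule term_deriv)
    show "(\<lambda>n. aa n * (Re (z ^ mm n))\<^sup>2) sums VV z" unfolding VV_def
      by (rule summable_sums[OF summable_VV]) (use z in simp)
  qed
  then obtain g where g: "\<And>x. x \<in> S \<Longrightarrow> (\<lambda>n. aa n * (Re (x ^ mm n))\<^sup>2) sums g x \<and> (g has_derivative VVd x) (at x within S)"
    by blast
  have gV: "g x = VV x" if "x \<in> S" for x
  proof -
    have "cmod x \<le> 1" using that r by (simp add: S_def)
    then show ?thesis using g[OF that] sums_unique summable_VV unfolding VV_def
      by (metis sums_unique2 summable_sums)
  qed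
  have "(g has_derivative VVd z) (at z)"
    using g[OF zS] at_within_open[OF zS] by (simp add: S_def)
  then show ?thesis
    by (rule has_derivative_transform_within_open[where s=S]) (use gV zS in \<open>auto simp: S_def\<close>)
qed

lemma hh_deriv:
  assumes z: "cmod z < 1"
  shows "(hh has_derivative DH z) (at z)"
proof -
  have "((\<lambda>w. w * of_real (1 + VV w)) has_derivative (\<lambda>v. v * of_real (1 + VV z) + z * of_real (VVd z v))) (at z)"
    using VV_deriv[OF z] by (auto intro!: derivative_eq_intros)
  then have "((\<lambda>w. w * of_real (1 + VV w)) has_derivative DH z) (at z)"
    by (simp add: DH_def[abs_def])
  then show ?thesis
    by (rule has_derivative_transform_within_open[where s="ball 0 1"]) (use z in \<open>auto simp: hh_def PP_id\<close>)
qed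


lemma ball_sets[measurable]: "ball (c::complex) r \<in> sets borel"
  by simp

lemma emeasure_ball_C: "r \<ge> 0 \<Longrightarrow> emeasure lborel (ball (0::complex) r) = ennreal (pi * r^2)"
  using emeasure_ball[of r "0::complex"] by (simp add: unit_ball_vol_2)

lemma scale_nn:
  fixes f :: "complex \<Rightarrow> ennreal"
  assumes f[measurable]: "f \<in> borel_measurable borel" and c: "c > 0"
  shows "(\<integral>\<^sup>+z. f z \<partial>lborel) = ennreal (c^2) * (\<integral>\<^sup>+z. f (of_real c * z) \<partial>lborel)"
proof -
  have L: "lborel = density (distr lborel borel (\<lambda>x::complex. 0 + c *\<^sub>R x)) (\<lambda>_. ennreal (\<bar>c\<bar>^DIM(complex)))"
    using lborel_affine[of c "0::complex"] c by simp
  have "(\<integral>\<^sup>+z. f z \<partial>lborel) = (\<integral>\<^sup>+z. f z \<partial>(density (distr lborel borel (\<lambda>x::complex. 0 + c *\<^sub>R x)) (\<lambda>_. ennreal (\<bar>c\<bar>^DIM(complex)))))"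
    using arg_cong[OF L, of "\<lambda>M. integral\<^sup>N M f"] by simp
  also have "\<dots> = (\<integral>\<^sup>+z. ennreal (\<bar>c\<bar>^DIM(complex)) * f z \<partial>(distr lborel borel (\<lambda>x::complex. 0 + c *\<^sub>R x)))"
    by (rule nn_integral_density) auto
  also have "\<dots> = (\<integral>\<^sup>+z. ennreal (\<bar>c\<bar>^DIM(complex)) * f (0 + c *\<^sub>R z) \<partial>lborel)"
    by (rule nn_integral_distr) auto
  also have "\<dots> = ennreal (c^2) * (\<integral>\<^sup>+z. f (of_real c * z) \<partial>lborel)"
    using c by (subst nn_integral_cmult) (auto simp: scaleR_conv_of_real)
  finally show ?thesis .
qed

definition JJ :: "nat \<Rightarrow> real \<Rightarrow> ennreal" where
  "JJ k r = (\<integral>\<^sup>+z. ennreal (cmod z ^ k) * indicator (ball 0 r) z \<partial>lborel)"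

lemma JJ_scale: "r > 0 \<Longrightarrow> JJ k r = ennreal (r^(k+2)) * JJ k 1"
proof -
  assume r: "r > 0"
  have "JJ k r = ennreal (r^2) * (\<integral>\<^sup>+z. ennreal (cmod (of_real r * z) ^ k) * indicator (ball 0 r) (of_real r * z) \<partial>lborel)"
    unfolding JJ_def by (rule scale_nn[OF _ r]) measurable
  also have "(\<lambda>z. ennreal (cmod (of_real r * z) ^ k) * indicator (ball 0 r) (of_real r * z))
      = (\<lambda>z. ennreal (r^k) * (ennreal (cmod z ^ k) * indicator (ball 0 1) z))"
  proof
    fix z :: complex
    have "(of_real r * z \<in> ball 0 r) = (z \<in> ball 0 1)" using r by (simp add: norm_mult)
    then show "ennreal (cmod (of_real r * z) ^ k) * indicator (ball 0 r) (of_real r * z)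
      = ennreal (r^k) * (ennreal (cmod z ^ k) * indicator (ball 0 1) z)"
      using r by (auto simp: norm_mult power_mult_distrib ennreal_mult split: split_indicator)
  qed
  also have "(\<integral>\<^sup>+z. ennreal (r^k) * (ennreal (cmod z ^ k) * indicator (ball 0 1) z) \<partial>lborel) = ennreal (r^k) * JJ k 1"
    unfolding JJ_def by (rule nn_integral_cmult) measurable
  finally have X: "JJ k r = ennreal (r^2) * (ennreal (r^k) * JJ k 1)" .
  have Y: "ennreal (r^(k+2)) = ennreal (r^2) * ennreal (r^k)"
    using r by (simp add: ennreal_mult[symmetric] power_add mult.commute power2_eq_square)
  show ?thesis unfolding X Y by (simp add: mult.assoc)
qed

lemma JJ_split: "0 < r \<Longrightarrow> r \<le> 1 \<Longrightarrow> JJ k 1 \<le> JJ k r + ennreal (pi * (1 - r^2))"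
proof -
  assume r: "0 < r" "r \<le> 1"
  have "JJ k 1 \<le> (\<integral>\<^sup>+z. ennreal (cmod z ^ k) * indicator (ball 0 r) z + indicator (ball 0 1 - ball 0 r) z \<partial>lborel)"
    unfolding JJ_def
  proof (rule nn_integral_mono)
    fix z :: complex
    show "ennreal (cmod z ^ k) * indicator (ball 0 1) z \<le> ennreal (cmod z ^ k) * indicator (ball 0 r) z + indicator (ball 0 1 - ball 0 r) z"
    proof (cases "z \<in> ball 0 1")
      case True
      then have "cmod z ^ k \<le> 1" by (intro power_le_one) auto
      then show ?thesis using True by (auto split: split_indicator)
    qed simp
  qed
  also have "\<dots> = JJ k r + (\<integral>\<^sup>+z. indicator (ball (0::complex) 1 - ball 0 r) z \<partial>lborel)"
    unfolding JJ_def by (rule nn_integral_add) auto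
  also have "(\<integral>\<^sup>+z. indicator (ball (0::complex) 1 - ball 0 r) z \<partial>lborel) = emeasure lborel (ball (0::complex) 1 - ball 0 r)"
    by (rule nn_integral_indicator) simp
  also have "emeasure lborel (ball (0::complex) 1 - ball 0 r) = emeasure lborel (ball (0::complex) 1) - emeasure lborel (ball (0::complex) r)"
    by (rule emeasure_Diff) (use r in \<open>auto simp: emeasure_ball_C\<close>)
  also have "\<dots> = ennreal (pi * (1 - r^2))"
    using r by (simp add: emeasure_ball_C ennreal_minus algebra_simps)
  finally show ?thesis .
qed

lemma JJ1_finite: "JJ k 1 \<le> ennreal pi"
proof -
  have "JJ k 1 \<le> (\<integral>\<^sup>+z. ennreal 1 * indicator (ball (0::complex) 1) z \<partial>lborel)"
    unfolding JJ_def
  proof (rule nn_integral_mono)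
    fix z :: complex
    show "ennreal (cmod z ^ k) * indicator (ball 0 1) z \<le> ennreal 1 * indicator (ball 0 1) z"
    proof (cases "z \<in> ball 0 1")
      case True
      then have "cmod z ^ k \<le> 1" by (intro power_le_one) auto
      then show ?thesis using True by (auto split: split_indicator)
    qed simp
  qed
  also have "\<dots> = ennreal pi" by (simp add: emeasure_ball_C)
  finally show ?thesis .
qed

lemma ball_pow: "JJ k 1 \<le> ennreal (4 * pi / (real k + 2))"
proof -
  define N where "N = real k + 2"
  have N: "N \<ge> 2" by (simp add: N_def)
  define r where "r = 1 - 1 / N"
  have r: "0 < r" "r \<le> 1" using N by (auto simp: r_def)
  have "JJ k 1 \<noteq> top" using JJ1_finite[of k] by (metis ennreal_neq_top top.extremum_unique)
  then obtain j where j: "JJ k 1 = ennreal j" "j \<ge> 0"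
    by (cases "JJ k 1" rule: ennreal_cases) auto
  have "JJ k r = ennreal (r^(k+2) * j)" using JJ_scale[OF r(1), of k] j r by (simp add: ennreal_mult)
  then have "ennreal j \<le> ennreal (r^(k+2) * j) + ennreal (pi * (1 - r^2))"
    using JJ_split[OF r, of k] j by simp
  moreover have nn1: "0 \<le> r^(k+2) * j" using r j by simp
  moreover have nn2: "0 \<le> pi * (1 - r^2)" using r by (simp add: power_le_one)
  ultimately have "ennreal j \<le> ennreal (r^(k+2) * j + pi * (1 - r^2))"
    by (simp add: ennreal_plus)
  then have ineq: "j \<le> r^(k+2) * j + pi * (1 - r^2)"
    using nn1 nn2 by (subst (asm) ennreal_le_iff) auto
  have "r \<le> exp (- (1 / N))" unfolding r_def using exp_ge_add_one_self[of "- (1/N)"] by simp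
  then have "r^(k+2) \<le> exp (- (1/N)) ^ (k+2)" using r by (intro power_mono) auto
  also have "\<dots> = exp (real (k+2) * (- (1/N)))" by (rule exp_of_nat_mult[symmetric])
  also have "\<dots> = exp (-1)" using N by (simp add: N_def)
  also have "\<dots> \<le> 1/2"
  proof -
    have "2 \<le> exp (1::real)" using exp_ge_add_one_self[of 1] by simp
    then show ?thesis by (simp add: exp_minus inverse_eq_divide)
  qed
  finally have rk: "r^(k+2) \<le> 1/2" .
  have "1 - r^2 \<le> 2 / N"
  proof -
    have "1 - r^2 = (1 - r) * (1 + r)" by (simp add: power2_eq_square algebra_simps)
    also have "\<dots> \<le> (1 - r) * 2" using r by (intro mult_left_mono) auto
    also have "\<dots> = 2 / N" by (simp add: r_def)
    finally show ?thesis .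
  qed
  then have "pi * (1 - r^2) \<le> pi * (2 / N)" by (rule mult_left_mono) simp
  with ineq rk j have "j \<le> 1/2 * j + pi * (2 / N)"
    by (smt (verit, best) mult_right_mono)
  then have "j \<le> 4 * pi / N" by (simp add: field_simps)
  then show ?thesis using j by (simp add: N_def ennreal_leI)
qed


lemma ibp:
  fixes F :: "complex \<Rightarrow> complex" and F' :: "complex \<Rightarrow> complex \<Rightarrow> complex"
  assumes deriv: "\<And>z. (F has_derivative F' z) (at z)"
    and bnd: "\<And>z. cmod (F' z v) \<le> M"
    and supp: "\<And>z. R < cmod z \<Longrightarrow> F z = 0"
  shows "integrable lborel (\<lambda>z. F' z v) \<and> (\<integral>z. F' z v \<partial>lborel) = 0"
proof -
  have contF: "continuous_on UNIV F"
    using deriv has_derivative_continuous continuous_at_imp_continuous_on by blast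
  have [measurable]: "F \<in> borel_measurable borel" by (rule borel_measurable_continuous_onI[OF contF])
  have R0: "R \<ge> 0 \<or> (\<forall>z. F z = 0)" using supp by (metis norm_ge_zero not_le order.trans)
  have Fi: "integrable lborel F"
  proof -
    have "integrable lborel (\<lambda>z. indicator (cball 0 (max R 0)) z *\<^sub>R F z)"
      by (rule borel_integrable_compact) (auto intro: continuous_on_subset[OF contF])
    moreover have "indicator (cball 0 (max R 0)) z *\<^sub>R F z = F z" for z
      using supp[of z] by (cases "cmod z \<le> max R 0") (auto split: split_indicator)
    ultimately show ?thesis by simp
  qed
  define e where "e n = 1 / real (Suc n)" for n
  have e: "0 < e n" "e n \<le> 1" for n by (auto simp: e_def)
  define q where "q n z = (F (z + of_real (e n) * v) - F z) / of_real (e n)" for n z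
  have qm[measurable]: "q n \<in> borel_measurable borel" for n unfolding q_def by measurable
  have lim: "(\<lambda>n. q n z) \<longlonglongrightarrow> F' z v" for z
  proof (cases "v = 0")
    case True
    have "F' z v = 0" using True deriv[of z] by (simp add: has_derivative_def linear_simps(3))
    then show ?thesis using True by (simp add: q_def)
  next
    case False
    have bl: "bounded_linear (F' z)" using deriv[of z] by (simp add: has_derivative_def)
    have H: "((\<lambda>h. norm (F (z + h) - F z - F' z h) / norm h) \<longlongrightarrow> 0) (at 0)"
      using deriv[of z] by (simp add: has_derivative_at)
    have en: "e \<longlonglongrightarrow> 0" unfolding e_def by (rule LIMSEQ_Suc[OF lim_inverse_n'])
    have hlim: "filterlim (\<lambda>n. of_real (e n) * v) (at 0) sequentially"
    proof (subst filterlim_at, intro conjI)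
      have "\<forall>n. of_real (e n) * v \<in> UNIV \<and> of_real (e n) * v \<noteq> 0"
        using e(1) False by (metis UNIV_I less_irrefl mult_eq_0_iff of_real_eq_0_iff)
      then show "\<forall>\<^sub>F n in sequentially. of_real (e n) * v \<in> UNIV \<and> of_real (e n) * v \<noteq> 0"
        by (rule always_eventually)
      show "((\<lambda>n. of_real (e n) * v) \<longlongrightarrow> 0) sequentially"
        using tendsto_mult[OF tendsto_of_real[OF en] tendsto_const[of v]] by simp
    qed
    have "(\<lambda>n. norm (F (z + of_real (e n) * v) - F z - F' z (of_real (e n) * v)) / norm (of_real (e n) * v)) \<longlonglongrightarrow> 0"
      by (rule filterlim_compose[OF H hlim])
    then have "(\<lambda>n. norm (F (z + of_real (e n) * v) - F z - F' z (of_real (e n) * v)) / norm (of_real (e n) * v) * norm v) \<longlonglongrightarrow> 0 * norm v"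
      by (intro tendsto_intros)
    moreover have "norm (F (z + of_real (e n) * v) - F z - F' z (of_real (e n) * v)) / norm (of_real (e n) * v) * norm v
        = norm (q n z - F' z v)" for n
    proof -
      have lin: "F' z (of_real (e n) * v) = of_real (e n) * F' z v"
        using linear_scale[OF bounded_linear.linear[OF bl], of "e n" v] by (simp add: scaleR_conv_of_real)
      have "q n z - F' z v = (F (z + of_real (e n) * v) - F z - F' z (of_real (e n) * v)) / of_real (e n)"
        unfolding q_def lin using e[of n] by (simp add: field_simps)
      then show ?thesis using e[of n] False by (simp add: norm_mult norm_divide)
    qed
    ultimately have "(\<lambda>n. norm (q n z - F' z v)) \<longlonglongrightarrow> 0" by simp
    then show ?thesis by (simp add: tendsto_norm_zero_iff LIM_zero_iff)
  qed
  have [measurable]: "(\<lambda>z. F' z v) \<in> borel_measurable borel"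
    by (rule borel_measurable_LIMSEQ_metric[OF qm lim])
  have qb: "cmod (q n z) \<le> M" for n z
  proof -
    define g where "g t = F (z + of_real t * v)" for t
    have dg: "(g has_derivative (\<lambda>s. F' (z + of_real t * v) (of_real s * v))) (at t)" for t
    proof -
      have "((\<lambda>t. z + of_real t * v) has_derivative (\<lambda>s. of_real s * v)) (at t)"
        by (auto intro!: derivative_eq_intros)
      from has_derivative_compose[OF this deriv] show ?thesis unfolding g_def[abs_def] by (simp add: o_def)
    qed
    have cg: "continuous_on {0..e n} g"
      using dg has_derivative_continuous continuous_at_imp_continuous_on by blast
    obtain x where "norm (g (e n) - g 0) \<le> norm (F' (z + of_real x * v) (of_real (e n - 0) * v))"
      using mvt_general[OF e(1)[of n] cg, of "\<lambda>t s. F' (z + of_real t * v) (of_real s * v)"] dg by auto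
    also have "F' (z + of_real x * v) (of_real (e n - 0) * v) = of_real (e n) * F' (z + of_real x * v) v"
      using linear_scale[OF bounded_linear.linear[OF has_derivative_bounded_linear[OF deriv[of "z + of_real x * v"]]], of "e n" v]
      by (simp add: scaleR_conv_of_real)
    finally have "norm (g (e n) - g 0) \<le> e n * cmod (F' (z + of_real x * v) v)"
      using e[of n] by (simp add: norm_mult)
    also have "\<dots> \<le> e n * M" using e[of n] bnd by (intro mult_left_mono) auto
    finally have "norm (g (e n) - g 0) \<le> e n * M" .
    then show ?thesis unfolding q_def g_def using e[of n] by (simp add: norm_divide divide_le_eq mult.commute)
  qed
  have qs: "q n z = 0" if "R + cmod v < cmod z" for n z
  proof -
    have "cmod (of_real (e n) * v) \<le> cmod v" using e[of n] by (simp add: norm_mult mult_left_le_one_le)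
    then have "R < cmod (z + of_real (e n) * v)" using that norm_triangle_ineq2[of z "- (of_real (e n) * v)"] by simp
    moreover have "R < cmod z" using that by (meson le_add_same_cancel1 norm_ge_zero order_le_less_trans)
    ultimately show ?thesis by (simp add: q_def supp)
  qed
  define w where "w z = indicator (cball 0 (R + cmod v)) z *\<^sub>R M" for z :: complex
  have wi: "integrable lborel w" unfolding w_def
    by (rule borel_integrable_compact) auto
  have dom: "norm (q n z) \<le> w z" for n z
    using qb[of n z] qs[of z n] by (cases "cmod z \<le> R + cmod v") (auto simp: w_def split: split_indicator)
  have qint: "(\<integral>z. q n z \<partial>lborel) = 0" for n
  proof -
    define c where "c = of_real (e n) * v"
    have tr: "(\<integral>z. F (z + c) \<partial>lborel) = (\<integral>z. F z \<partial>lborel)"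
    proof -
      have "(\<integral>z. F z \<partial>lborel) = (\<integral>z. F z \<partial>(distr lborel borel ((+) c)))"
        by (simp add: lborel_distr_plus)
      also have "\<dots> = (\<integral>z. F (c + z) \<partial>lborel)" by (rule integral_distr) auto
      finally show ?thesis by (simp add: add.commute)
    qed
    have Fc: "integrable lborel (\<lambda>z. F (z + c))"
    proof -
      have "integrable (distr lborel borel ((+) c)) F" by (simp add: lborel_distr_plus Fi)
      then have "integrable lborel (\<lambda>z. F (c + z))" by (subst (asm) integrable_distr_eq) auto
      then show ?thesis by (simp add: add.commute)
    qed
    have "(\<integral>z. q n z \<partial>lborel) = (\<integral>z. (F (z + c) - F z) / of_real (e n) \<partial>lborel)"
      by (simp add: q_def c_def)
    also have "\<dots> = (\<integral>z. F (z + c) - F z \<partial>lborel) / of_real (e n)"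
      by (rule integral_divide_zero)
    also have "(\<integral>z. F (z + c) - F z \<partial>lborel) = 0"
      using Bochner_Integration.integral_diff[OF Fc Fi] tr by simp
    finally show ?thesis by simp
  qed
  have "integrable lborel (\<lambda>z. F' z v)"
  proof (rule integrable_dominated_convergence[where s=q and w=w])
    show "(\<lambda>z. F' z v) \<in> borel_measurable lborel" by measurable
    show "q i \<in> borel_measurable lborel" for i by measurable
    show "integrable lborel w" by (rule wi)
    show "AE x in lborel. (\<lambda>i. q i x) \<longlonglongrightarrow> F' x v" by (rule AE_I2, rule lim)
    show "AE x in lborel. norm (q i x) \<le> w x" for i by (rule AE_I2, rule dom)
  qed
  moreover have "(\<lambda>n. \<integral>z. q n z \<partial>lborel) \<longlonglongrightarrow> (\<integral>z. F' z v \<partial>lborel)"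
  proof (rule integral_dominated_convergence[where s=q and w=w])
    show "(\<lambda>z. F' z v) \<in> borel_measurable lborel" by measurable
    show "q i \<in> borel_measurable lborel" for i by measurable
    show "integrable lborel w" by (rule wi)
    show "AE x in lborel. (\<lambda>i. q i x) \<longlonglongrightarrow> F' x v" by (rule AE_I2, rule lim)
    show "AE x in lborel. norm (q i x) \<le> w x" for i by (rule AE_I2, rule dom)
  qed
  then have "(\<lambda>n. 0) \<longlonglongrightarrow> (\<integral>z. F' z v \<partial>lborel)" by (simp add: qint)
  then have "(\<integral>z. F' z v \<partial>lborel) = 0" using tendsto_const LIMSEQ_unique by metis
  ultimately show ?thesis by simp
qed


lemma DH_meas: "(\<lambda>z. indicator (ball 0 1) z *\<^sub>R DH z v) \<in> borel_measurable borel"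
proof -
  define S where "S N z = v * of_real (1 + (\<Sum>i<N. aa i * (Re (z ^ mm i))\<^sup>2)) + z * of_real (\<Sum>i<N. tt i z v)" for N z
  show ?thesis
  proof (rule borel_measurable_LIMSEQ_metric[where f="\<lambda>N z. indicator (ball 0 1) z *\<^sub>R S N z"])
    show "(\<lambda>z. indicator (ball 0 1) z *\<^sub>R S N z) \<in> borel_measurable borel" for N
      by (rule borel_measurable_continuous_on_indicator) (auto simp: S_def tt_def intro!: continuous_intros)
    fix z :: complex
    show "(\<lambda>N. indicator (ball 0 1) z *\<^sub>R S N z) \<longlonglongrightarrow> indicator (ball 0 1) z *\<^sub>R DH z v"
    proof (cases "z \<in> ball 0 1")
      case True
      then have z: "cmod z < 1" by simp
      have l1: "(\<lambda>N. \<Sum>i<N. aa i * (Re (z ^ mm i))\<^sup>2) \<longlonglongrightarrow> VV z"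
        unfolding VV_def using summable_LIMSEQ[OF summable_VV[of z]] z by simp
      have l2: "(\<lambda>N. \<Sum>i<N. tt i z v) \<longlonglongrightarrow> VVd z v"
        unfolding VVd_def using summable_LIMSEQ[OF summable_tt[OF z, of v]] .
      have "(\<lambda>N. S N z) \<longlonglongrightarrow> DH z v"
        unfolding S_def DH_def
        by (intro tendsto_add tendsto_mult tendsto_const tendsto_of_real l1 l2)
      then show ?thesis using True by simp
    qed simp
  qed
qed

lemma DH_norm:
  assumes z: "cmod z < 1"
  shows "summable (\<lambda>n. aa n * (2 * real (mm n)) * cmod z ^ (2 * mm n) * cmod v)"
    and "cmod (DH z v) \<le> 3 * cmod v + (\<Sum>n. aa n * (2 * real (mm n)) * cmod z ^ (2 * mm n) * cmod v)"
proof -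
  define b where "b n = aa n * (2 * real (mm n)) * cmod z ^ (2 * mm n) * cmod v" for n
  have zz: "cmod z \<le> 1" using z by simp
  have tb: "cmod z * \<bar>tt n z v\<bar> \<le> b n" for n
  proof -
    have "cmod z * \<bar>tt n z v\<bar> \<le> cmod z * (aa n * (2 * real (mm n) * cmod z ^ mm n * cmod z ^ (mm n - 1) * cmod v))"
      by (intro mult_left_mono tt_bound) auto
    also have "cmod z * (aa n * (2 * real (mm n) * cmod z ^ mm n * cmod z ^ (mm n - 1) * cmod v))
        = aa n * (2 * real (mm n)) * (cmod z ^ mm n * (cmod z * cmod z ^ (mm n - 1))) * cmod v"
      by (simp add: ac_simps)
    also have "cmod z * cmod z ^ (mm n - 1) = cmod z ^ mm n"
      using mm_pos[of n] by (metis Suc_diff_1 less_le_trans power_Suc zero_less_one)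
    also have "cmod z ^ mm n * cmod z ^ mm n = cmod z ^ (2 * mm n)"
      by (simp add: power_add[symmetric] mult_2)
    finally show ?thesis by (simp add: b_def)
  qed
  have bb: "b n \<le> aa n * (2 / (1 - cmod z)) * cmod v" for n
  proof -
    have "cmod z ^ (2 * mm n) \<le> cmod z ^ (mm n - 1)"
      by (rule power_decreasing) (use zz in auto)
    then have "real (mm n) * cmod z ^ (2 * mm n) \<le> real (mm n) * cmod z ^ (mm n - 1)"
      by (intro mult_left_mono) auto
    also have "\<dots> \<le> 1 / (1 - cmod z)" by (rule kpow) (use z in auto)
    finally have "real (mm n) * cmod z ^ (2 * mm n) \<le> 1 / (1 - cmod z)" .
    then have "(aa n * 2 * cmod v) * (real (mm n) * cmod z ^ (2 * mm n)) \<le> (aa n * 2 * cmod v) * (1 / (1 - cmod z))"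
      by (rule mult_left_mono) (use aa_pos[of n] in auto)
    then show ?thesis by (simp add: b_def ac_simps)
  qed
  have b0: "b n \<ge> 0" for n using aa_pos[of n] by (simp add: b_def)
  have sa: "summable (\<lambda>n. aa n * (2 / (1 - cmod z)) * cmod v)" by (intro summable_mult2 summable_aa)
  show sb: "summable (\<lambda>n. aa n * (2 * real (mm n)) * cmod z ^ (2 * mm n) * cmod v)"
    unfolding b_def[symmetric]
    by (rule summable_comparison_test'[OF sa, where N=0]) (use bb b0 in auto)
  have st: "summable (\<lambda>n. \<bar>tt n z v\<bar>)"
    by (rule summable_comparison_test'[OF sa, where N=0]) (use tt_bound_rho[OF order.refl _ z] in simp)
  have "cmod (z * of_real (VVd z v)) = cmod z * \<bar>VVd z v\<bar>" by (simp add: norm_mult)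
  also have "\<dots> \<le> cmod z * (\<Sum>n. \<bar>tt n z v\<bar>)"
    unfolding VVd_def by (intro mult_left_mono summable_rabs st) auto
  also have "\<dots> = (\<Sum>n. cmod z * \<bar>tt n z v\<bar>)" by (rule suminf_mult[OF st, symmetric])
  also have "\<dots> \<le> (\<Sum>n. b n)"
    by (rule suminf_le[OF tb summable_mult[OF st] sb[folded b_def]])
  finally have A: "cmod (z * of_real (VVd z v)) \<le> (\<Sum>n. b n)" .
  have B: "cmod (v * of_real (1 + VV z)) \<le> 3 * cmod v"
  proof -
    have "\<bar>1 + VV z\<bar> \<le> 3" using VV_nonneg[OF zz] VV_le2[OF zz] by simp
    then show ?thesis by (simp add: norm_mult mult.commute mult_left_mono del: of_real_add)
  qed
  show "cmod (DH z v) \<le> 3 * cmod v + (\<Sum>n. aa n * (2 * real (mm n)) * cmod z ^ (2 * mm n) * cmod v)"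
    unfolding DH_def b_def[symmetric] using A B norm_triangle_ineq[of "v * of_real (1 + VV z)" "z * of_real (VVd z v)"]
    by linarith
qed

lemma DH_integrable: "set_integrable lborel (ball (0::complex) 1) (\<lambda>z. DH z v)"
  unfolding set_integrable_def
proof (rule integrableI_bounded)
  show "(\<lambda>z. indicator (ball (0::complex) 1) z *\<^sub>R DH z v) \<in> borel_measurable lborel"
    using DH_meas by simp
  define c where "c n = aa n * (2 * real (mm n)) * cmod v" for n
  have c0: "c n \<ge> 0" for n using aa_pos[of n] by (simp add: c_def)
  have pw: "ennreal (norm (indicator (ball (0::complex) 1) z *\<^sub>R DH z v))
      \<le> ennreal (3 * cmod v) * indicator (ball (0::complex) 1) z + (\<Sum>n. ennreal (c n) * (ennreal (cmod z ^ (2 * mm n)) * indicator (ball (0::complex) 1) z))" for z :: complex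
  proof (cases "z \<in> ball (0::complex) 1")
    case True
    then have z: "cmod z < 1" by simp
    have e: "aa n * (2 * real (mm n)) * cmod z ^ (2 * mm n) * cmod v = c n * cmod z ^ (2 * mm n)" for n
      by (simp add: c_def ac_simps)
    have "ennreal (norm (indicator (ball (0::complex) 1) z *\<^sub>R DH z v)) = ennreal (cmod (DH z v))" using True by simp
    also have "\<dots> \<le> ennreal (3 * cmod v + (\<Sum>n. c n * cmod z ^ (2 * mm n)))"
      using DH_norm(2)[OF z, of v] unfolding e by (rule ennreal_leI)
    also have "\<dots> = ennreal (3 * cmod v) + ennreal (\<Sum>n. c n * cmod z ^ (2 * mm n))"
      using c0 by (intro ennreal_plus) (auto intro!: suminf_nonneg DH_norm(1)[OF z, of v, unfolded e])
    also have "ennreal (\<Sum>n. c n * cmod z ^ (2 * mm n)) = (\<Sum>n. ennreal (c n * cmod z ^ (2 * mm n)))"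
      using c0 by (intro suminf_ennreal2[symmetric] DH_norm(1)[OF z, of v, unfolded e]) auto
    also have "\<dots> = (\<Sum>n. ennreal (c n) * (ennreal (cmod z ^ (2 * mm n)) * indicator (ball (0::complex) 1) z))"
      using True c0 by (simp add: ennreal_mult)
    finally show ?thesis using True by simp
  qed simp
  have "(\<integral>\<^sup>+z. ennreal (norm (indicator (ball (0::complex) 1) z *\<^sub>R DH z v)) \<partial>lborel)
      \<le> (\<integral>\<^sup>+z. ennreal (3 * cmod v) * indicator (ball (0::complex) 1) z + (\<Sum>n. ennreal (c n) * (ennreal (cmod z ^ (2 * mm n)) * indicator (ball (0::complex) 1) z)) \<partial>lborel)"
    by (rule nn_integral_mono) (rule pw)
  also have "\<dots> = (\<integral>\<^sup>+z. ennreal (3 * cmod v) * indicator (ball (0::complex) 1) z \<partial>lborel)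
      + (\<integral>\<^sup>+z. (\<Sum>n. ennreal (c n) * (ennreal (cmod z ^ (2 * mm n)) * indicator (ball (0::complex) 1) z)) \<partial>lborel)"
    by (rule nn_integral_add) auto
  also have "(\<integral>\<^sup>+z. (\<Sum>n. ennreal (c n) * (ennreal (cmod z ^ (2 * mm n)) * indicator (ball (0::complex) 1) z)) \<partial>lborel)
      = (\<Sum>n. \<integral>\<^sup>+z. ennreal (c n) * (ennreal (cmod z ^ (2 * mm n)) * indicator (ball (0::complex) 1) z) \<partial>lborel)"
    by (rule nn_integral_suminf) auto
  also have "\<dots> = (\<Sum>n. ennreal (c n) * JJ (2 * mm n) 1)"
    unfolding JJ_def by (subst nn_integral_cmult) auto
  also have "\<dots> \<le> (\<Sum>n. ennreal (aa n * (4 * pi * cmod v)))"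
  proof (rule suminf_le)
    fix n
    have "ennreal (c n) * JJ (2 * mm n) 1 \<le> ennreal (c n) * ennreal (4 * pi / (real (2 * mm n) + 2))"
      by (intro mult_left_mono ball_pow) auto
    also have "\<dots> = ennreal (c n * (4 * pi / (real (2 * mm n) + 2)))"
      by (rule ennreal_mult[symmetric]) (use c0[of n] in auto)
    also have "c n * (4 * pi / (real (2 * mm n) + 2)) \<le> aa n * (4 * pi * cmod v)"
    proof -
      have "real (mm n) / (real (2 * mm n) + 2) \<le> 1/2" by (simp add: field_simps)
      then have "(aa n * 2 * cmod v * 4 * pi) * (real (mm n) / (real (2 * mm n) + 2)) \<le> (aa n * 2 * cmod v * 4 * pi) * (1/2)"
        by (rule mult_left_mono) (use aa_pos[of n] in auto)
      then show ?thesis by (simp add: c_def ac_simps)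
    qed
    then have "ennreal (c n * (4 * pi / (real (2 * mm n) + 2))) \<le> ennreal (aa n * (4 * pi * cmod v))"
      by (rule ennreal_leI)
    finally show "ennreal (c n) * JJ (2 * mm n) 1 \<le> ennreal (aa n * (4 * pi * cmod v))" .
  qed auto
  also have "\<dots> = ennreal (\<Sum>n. aa n * (4 * pi * cmod v))"
    by (intro suminf_ennreal2 summable_mult2 summable_aa) (simp add: aa_def)
  finally have X: "(\<integral>\<^sup>+z. ennreal (norm (indicator (ball (0::complex) 1) z *\<^sub>R DH z v)) \<partial>lborel)
      \<le> (\<integral>\<^sup>+z. ennreal (3 * cmod v) * indicator (ball (0::complex) 1) z \<partial>lborel) + ennreal (\<Sum>n. aa n * (4 * pi * cmod v))"
    by simp
  have "(\<integral>\<^sup>+z. ennreal (3 * cmod v) * indicator (ball (0::complex) 1) z \<partial>lborel) = ennreal (3 * cmod v) * emeasure lborel (ball (0::complex) 1)"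
    by (subst nn_integral_cmult_indicator) auto
  also have "\<dots> < \<infinity>" using emeasure_lborel_ball_finite[of "0::complex" 1] by (simp add: ennreal_mult_less_top)
  finally have Y: "(\<integral>\<^sup>+z. ennreal (3 * cmod v) * indicator (ball (0::complex) 1) z \<partial>lborel) < \<infinity>" .
  show "(\<integral>\<^sup>+z. ennreal (norm (indicator (ball (0::complex) 1) z *\<^sub>R DH z v)) \<partial>lborel) < \<infinity>"
    using X Y by (simp add: ennreal_add_less_top order_le_less_trans)
qed


lemma smooth_diff: "smooth_fun f \<Longrightarrow> f differentiable (at z)"
  by (erule smooth_fun.cases) auto

lemma smooth_cont: "smooth_fun f \<Longrightarrow> continuous_on UNIV f"
  by (meson continuous_at_imp_continuous_on differentiable_imp_continuous_within smooth_diff)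

lemma smooth_parts: "smooth_fun f \<Longrightarrow> smooth_fun (\<lambda>z. frechet_derivative f (at z) 1) \<and> smooth_fun (\<lambda>z. frechet_derivative f (at z) \<i>)"
  by (erule smooth_fun.cases) auto

lemma hh_norm: "cmod z \<le> 1 \<Longrightarrow> cmod (hh z) \<le> 3"
proof -
  assume z: "cmod z \<le> 1"
  have "cmod (hh z) = cmod z * \<bar>1 + VV z\<bar>" by (simp add: hh_def PP_id[OF z] norm_mult del: of_real_add)
  also have "\<dots> \<le> 1 * 3" using VV_nonneg[OF z] VV_le2[OF z] z by (intro mult_mono) auto
  finally show ?thesis by simp
qed

lemma DH_bound:
  assumes z: "cmod z \<le> r" and r: "0 \<le> r" "r < 1"
  shows "cmod (DH z v) \<le> (3 + 4 / (1 - r)) * cmod v"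
proof -
  have zz: "cmod z \<le> 1" using z r by simp
  have "cmod (v * of_real (1 + VV z)) \<le> 3 * cmod v"
  proof -
    have "\<bar>1 + VV z\<bar> \<le> 3" using VV_nonneg[OF zz] VV_le2[OF zz] by simp
    then show ?thesis by (simp add: norm_mult mult.commute mult_left_mono del: of_real_add)
  qed
  moreover have "cmod (z * of_real (VVd z v)) \<le> 1 * (4 / (1 - r) * cmod v)"
    unfolding norm_mult norm_of_real by (intro mult_mono VVd_bound[OF z r] zz) auto
  ultimately show ?thesis unfolding DH_def
    using norm_triangle_ineq[of "v * of_real (1 + VV z)" "z * of_real (VVd z v)"] by (simp add: algebra_simps)
qed

lemma weak_DH:
  assumes v: "v = 1 \<or> v = \<i>"
  shows "weak_partial (ball 0 1) v hh (\<lambda>z. DH z v)"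
  unfolding weak_partial_def
proof (intro allI impI)
  fix \<psi> assume tf: "test_function (ball 0 1) \<psi>"
  define K where "K = closure {z. \<psi> z \<noteq> 0}"
  have tf': "smooth_fun \<psi> \<and> compact K \<and> K \<subseteq> ball 0 1" using tf unfolding test_function_def K_def by blast
  then have K: "compact K" "K \<subseteq> ball 0 1" and sm: "smooth_fun \<psi>" by blast+
  have zK: "\<psi> z = 0" if "z \<notin> K" for z
  proof (rule ccontr)
    assume "\<psi> z \<noteq> 0"
    then have "z \<in> {z. \<psi> z \<noteq> 0}" by simp
    then have "z \<in> K" unfolding K_def using closure_subset by (rule subsetD[rotated])
    then show False using that by contradiction
  qed
  define P where "P z = frechet_derivative \<psi> (at z)" for z
  have dP: "(\<psi> has_derivative P z) (at z)" for z
    unfolding P_def by (rule frechet_derivative_works[THEN iffD1, OF smooth_diff[OF sm]])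
  have cpsi: "continuous_on UNIV \<psi>" by (rule smooth_cont[OF sm])
  have cPv: "continuous_on UNIV (\<lambda>z. P z v)"
  proof (cases "v = 1")
    case True
    have "smooth_fun (\<lambda>z. frechet_derivative \<psi> (at z) 1)" using smooth_parts[OF sm] by (rule conjunct1)
    then show ?thesis unfolding P_def True by (rule smooth_cont)
  next
    case False
    then have vi: "v = \<i>" using v by simp
    have "smooth_fun (\<lambda>z. frechet_derivative \<psi> (at z) \<i>)" using smooth_parts[OF sm] by (rule conjunct2)
    then show ?thesis unfolding P_def vi by (rule smooth_cont)
  qed
  have oK: "open (- K)" using compact_imp_closed[OF K(1)] by (simp add: open_Compl)
  have PK: "P z = (\<lambda>_. 0)" if "z \<notin> K" for z
  proof -
    have "(\<psi> has_derivative (\<lambda>_. 0)) (at z)"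
      by (rule has_derivative_transform_within_open[OF has_derivative_const oK]) (use that zK in auto)
    then show ?thesis using dP[of z] has_derivative_unique by blast
  qed
  obtain r0 where r0: "0 \<le> r0" "r0 < 1" "\<And>z. z \<in> K \<Longrightarrow> cmod z \<le> r0"
  proof (cases "K = {}")
    case True then show ?thesis using that[of 0] by auto
  next
    case False
    have "\<exists>s\<in>norm ` K. \<forall>t\<in>norm ` K. t \<le> s"
      by (rule compact_attains_sup) (use K(1) False in \<open>auto intro: compact_continuous_image continuous_on_norm_id\<close>)
    then obtain z0 where "z0 \<in> K" "\<And>z. z \<in> K \<Longrightarrow> cmod z \<le> cmod z0" by auto
    then show ?thesis using that[of "cmod z0"] K(2) by auto
  qed
  have "bounded (\<psi> ` K)"
    by (rule compact_imp_bounded[OF compact_continuous_image[OF continuous_on_subset[OF cpsi] K(1)]]) simp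
  then obtain Mp where "\<forall>x\<in>\<psi> ` K. norm x \<le> Mp" by (auto simp: bounded_iff)
  then have Mp: "\<And>z. z \<in> K \<Longrightarrow> \<bar>\<psi> z\<bar> \<le> Mp" by auto
  have "bounded ((\<lambda>z. P z v) ` K)"
    by (rule compact_imp_bounded[OF compact_continuous_image[OF continuous_on_subset[OF cPv] K(1)]]) simp
  then obtain MP where "\<forall>x\<in>(\<lambda>z. P z v) ` K. norm x \<le> MP" by (auto simp: bounded_iff)
  then have MP: "\<And>z. z \<in> K \<Longrightarrow> \<bar>P z v\<bar> \<le> MP" by auto
  define F where "F z = hh z * of_real (\<psi> z)" for z
  define F' where "F' z w = DH z w * of_real (\<psi> z) + hh z * of_real (P z w)" for z w
  have dF: "(F has_derivative F' z) (at z)" for z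
  proof (cases "z \<in> K")
    case True
    then have z: "cmod z < 1" using K by auto
    have "(F has_derivative (\<lambda>w. hh z * of_real (P z w) + DH z w * of_real (\<psi> z))) (at z)"
      unfolding F_def[abs_def] by (rule has_derivative_mult[OF hh_deriv[OF z] has_derivative_of_real[OF dP]])
    moreover have "(\<lambda>w. hh z * of_real (P z w) + DH z w * of_real (\<psi> z)) = F' z"
      by (auto simp: F'_def fun_eq_iff)
    ultimately show ?thesis by simp
  next
    case False
    have "(F has_derivative (\<lambda>_. 0)) (at z)"
      by (rule has_derivative_transform_within_open[OF has_derivative_const oK]) (use False zK in \<open>auto simp: F_def\<close>)
    moreover have "F' z = (\<lambda>_. 0)" using False zK PK by (auto simp: F'_def fun_eq_iff)
    ultimately show ?thesis by simp
  qed
  define M where "M = (3 + 4 / (1 - r0)) * cmod v * \<bar>Mp\<bar> + 3 * \<bar>MP\<bar>"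
  have bF: "cmod (F' z v) \<le> M" for z
  proof (cases "z \<in> K")
    case True
    have zr: "cmod z \<le> r0" using r0 True by auto
    have "cmod (F' z v) \<le> cmod (DH z v) * \<bar>\<psi> z\<bar> + cmod (hh z) * \<bar>P z v\<bar>"
      unfolding F'_def by (rule order_trans[OF norm_triangle_ineq]) (simp add: norm_mult)
    also have "\<dots> \<le> ((3 + 4 / (1 - r0)) * cmod v) * \<bar>Mp\<bar> + 3 * \<bar>MP\<bar>"
      using DH_bound[OF zr r0(1,2), of v] hh_norm[of z] zr r0 Mp[OF True] MP[OF True]
      by (intro add_mono mult_mono) auto
    finally show ?thesis by (simp add: M_def)
  next
    case False
    have "0 \<le> 3 + 4 / (1 - r0)" using r0 by auto
    then have "0 \<le> M" unfolding M_def by (intro add_nonneg_nonneg mult_nonneg_nonneg) (use r0 in auto)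
    then show ?thesis using False zK PK by (simp add: F'_def)
  qed
  have supp: "F z = 0" if "1 < cmod z" for z
  proof -
    have "z \<notin> K" using that K(2) by auto
    then show ?thesis by (simp add: F_def zK)
  qed
  from ibp[OF dF bF supp] have I1: "integrable lborel (\<lambda>z. F' z v)" and I0: "(\<integral>z. F' z v \<partial>lborel) = 0"
    by auto
  have zA: "hh z * of_real (P z v) = 0" if "z \<notin> K" for z using PK[OF that] by simp
  have zB: "DH z v * of_real (\<psi> z) = 0" if "z \<notin> K" for z using zK[OF that] by simp
  have iA: "integrable lborel (\<lambda>z. hh z * of_real (P z v))"
  proof -
    have "continuous_on UNIV (\<lambda>z. hh z * of_real (P z v))"
      by (intro continuous_on_mult cont_hh continuous_on_of_real cPv)
    then have "integrable lborel (\<lambda>z. indicator K z *\<^sub>R (hh z * of_real (P z v)))"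
      by (intro borel_integrable_compact[OF K(1)]) (rule continuous_on_subset, auto)
    moreover have "indicator K z *\<^sub>R (hh z * of_real (P z v)) = hh z * of_real (P z v)" for z
      using zA[of z] by (cases "z \<in> K") auto
    ultimately show ?thesis by simp
  qed
  have eqF: "F' z v = DH z v * of_real (\<psi> z) + hh z * of_real (P z v)" for z by (simp add: F'_def)
  have iB: "integrable lborel (\<lambda>z. DH z v * of_real (\<psi> z))"
  proof -
    have "integrable lborel (\<lambda>z. F' z v - hh z * of_real (P z v))"
      by (rule Bochner_Integration.integrable_diff[OF I1 iA])
    then show ?thesis by (simp add: eqF)
  qed
  have "(\<integral>z. F' z v \<partial>lborel) = (\<integral>z. DH z v * of_real (\<psi> z) \<partial>lborel) + (\<integral>z. hh z * of_real (P z v) \<partial>lborel)"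
    unfolding eqF by (rule Bochner_Integration.integral_add[OF iB iA])
  then have main: "(\<integral>z. hh z * of_real (P z v) \<partial>lborel) = - (\<integral>z. DH z v * of_real (\<psi> z) \<partial>lborel)"
    using I0 by (simp add: eq_neg_iff_add_eq_0 add.commute)
  have sA: "(LINT z:ball 0 1|lborel. hh z * of_real (P z v)) = (\<integral>z. hh z * of_real (P z v) \<partial>lborel)"
    unfolding set_lebesgue_integral_def
  proof (rule Bochner_Integration.integral_cong[OF refl])
    fix z show "indicator (ball 0 1) z *\<^sub>R (hh z * of_real (P z v)) = hh z * of_real (P z v)"
    proof (cases "z \<in> ball 0 1")
      case False then have "z \<notin> K" using K(2) by auto
      then show ?thesis using zA[of z] False by simp
    qed simp
  qed
  have sB: "(LINT z:ball 0 1|lborel. DH z v * of_real (\<psi> z)) = (\<integral>z. DH z v * of_real (\<psi> z) \<partial>lborel)"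
    unfolding set_lebesgue_integral_def
  proof (rule Bochner_Integration.integral_cong[OF refl])
    fix z show "indicator (ball 0 1) z *\<^sub>R (DH z v * of_real (\<psi> z)) = DH z v * of_real (\<psi> z)"
    proof (cases "z \<in> ball 0 1")
      case False then have "z \<notin> K" using K(2) by auto
      then show ?thesis using zB[of z] False by simp
    qed simp
  qed
  show "(LINT z:ball 0 1|lborel. hh z * of_real (frechet_derivative \<psi> (at z) v)) = - (LINT z:ball 0 1|lborel. DH z v * of_real (\<psi> z))"
    using sA sB main by (simp add: P_def)
qed

lemma sobolev_hh: "sobolev_W11 (ball 0 1) hh"
  unfolding sobolev_W11_def
proof (intro conjI exI)
  have "set_integrable lborel (cball 0 1) hh"
    unfolding set_integrable_def
    by (rule borel_integrable_compact) (auto intro: continuous_on_subset[OF cont_hh])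
  then show "set_integrable lborel (ball 0 1) hh"
    by (rule set_integrable_subset) auto
  show "set_integrable lborel (ball 0 1) (\<lambda>z. DH z 1)" by (rule DH_integrable)
  show "set_integrable lborel (ball 0 1) (\<lambda>z. DH z \<i>)" by (rule DH_integrable)
  show "weak_partial (ball 0 1) 1 hh (\<lambda>z. DH z 1)" by (rule weak_DH) simp
  show "weak_partial (ball 0 1) \<i> hh (\<lambda>z. DH z \<i>)" by (rule weak_DH) simp
qed

theorem theorem1p3:
  shows "\<exists>(Y::complex set) (h::complex \<Rightarrow> complex).
     jordan_domain Y \<and>
     (\<exists>k. homeomorphism (cball 0 1) (closure Y) h k) \<and>
     sobolev_W11 (ball 0 1) h \<and>
     (\<integral>\<^sup>+ t \<in> {0..2*pi}. (\<integral>\<^sup>+ s \<in> {0..2*pi}.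
         internal_dist Y (h (cis s)) (h (cis t)) / ennreal (cmod (cis s - cis t)) \<partial>lborel) \<partial>lborel)
       = \<infinity>"
  by (intro exI[of _ YY] exI[of _ hh] conjI jordan_YY homeo_hh sobolev_hh divergence)

end
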